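(* Let $\beta\in\{1,2\}$ and $N\ge1$. Let $X$ be an $N\times N$ random matrix with independent identically distributed standard Gaussian entries, real if $\beta=1$ and complex if $\beta=2$. For $\theta\in[0,1)$ let $U(\theta)$ be the unitary (orthogonal if $\beta=1$) factor of the QR-decomposition $U(\theta)R(\theta)=(1-\theta)X+\theta\mathbb{I}$, where $R(\theta)$ is upper triangular with positive diagonal entries. Then for $\theta\ll 1$, the distribution of $U(\theta)$ is $\mathcal{O}(\theta)$-close in total variation distance to the Haar measure on $\mathbb{O}(N)$ (if $\beta=1$) or $\mathbb{U}(N)$ (if $\beta=2$).
   Context: The Haar measure on $\mathbb{O}(N)$ or $\mathbb{U}(N)$ is the unique probability measure invariant under left and right multiplication by fixed group elements. The total variation distance between probability measures $\mu,\nu$ is $\sup_A|\mu(A)-\nu(A)|$. The implicit constant in $\mathcal{O}(\theta)$ may depend on $N$ and $\beta$. The QR-decomposition with positive diagonal of $R$ is unique for invertible matrices, which $(1-\theta)X+\theta\mathbb{I}$ is almost surely. *)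

theory Defs
  imports "HOL-Probability.Probability"
begin

text \<open>Matrices are N x N with N = CARD('n); the index type carries a linear
order so that "upper triangular" makes sense.\<close>

definition cnj_transpose :: "complex^'n^'n \<Rightarrow> complex^'n^'n" where
  "cnj_transpose A = (\<chi> i j. cnj (A $ j $ i))"

definition unitary_matrix :: "complex^'n^'n \<Rightarrow> bool" where
  "unitary_matrix U \<longleftrightarrow> cnj_transpose U ** U = mat 1 \<and> U ** cnj_transpose U = mat 1"

definition upper_triangular :: "('a::zero)^('n::{finite,linorder})^('n::{finite,linorder}) \<Rightarrow> bool" where
  "upper_triangular R \<longleftrightarrow> (\<forall>i j. j < i \<longrightarrow> R $ i $ j = 0)"

text \<open>Orthogonal factor of the QR decomposition (R upper triangular, positive diagonal).\<close>
definition qr_Q_real :: "real^('n::{finite,linorder})^('n::{finite,linorder}) \<Rightarrow> real^('n::{finite,linorder})^('n::{finite,linorder})" where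
  "qr_Q_real A = (THE Q. orthogonal_matrix Q \<and>
      (\<exists>R. upper_triangular R \<and> (\<forall>i. R $ i $ i > 0) \<and> A = Q ** R))"

text \<open>Unitary factor of the QR decomposition (R upper triangular, real positive diagonal).\<close>
definition qr_Q_complex :: "complex^('n::{finite,linorder})^('n::{finite,linorder}) \<Rightarrow> complex^('n::{finite,linorder})^('n::{finite,linorder})" where
  "qr_Q_complex A = (THE Q. unitary_matrix Q \<and>
      (\<exists>R. upper_triangular R \<and> (\<forall>i. Im (R $ i $ i) = 0 \<and> Re (R $ i $ i) > 0) \<and> A = Q ** R))"

text \<open>Law of a real N x N matrix with iid N(0,1) entries.\<close>
definition real_ginibre :: "(real^'n^'n) measure" where
  "real_ginibre = density lborel
     (\<lambda>X. ennreal (\<Prod>i\<in>UNIV. \<Prod>j\<in>UNIV. std_normal_density (X $ i $ j)))"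

text \<open>Standard complex Gaussian: density exp(-|z|^2)/pi w.r.t. Lebesgue measure on C
  (i.e. E|z|^2 = 1).\<close>
definition std_complex_normal_density :: "complex \<Rightarrow> real" where
  "std_complex_normal_density z = exp (- (cmod z)\<^sup>2) / pi"

definition complex_ginibre :: "(complex^'n^'n) measure" where
  "complex_ginibre = density lborel
     (\<lambda>X. ennreal (\<Prod>i\<in>UNIV. \<Prod>j\<in>UNIV. std_complex_normal_density (X $ i $ j)))"

text \<open>Haar measure: Borel probability measure concentrated on the group and
  invariant under left and right multiplication by group elements.\<close>
definition haar_orthogonal :: "(real^'n^'n) measure \<Rightarrow> bool" where
  "haar_orthogonal H \<longleftrightarrow> sets H = sets borel \<and> prob_space H \<and>
     measure H {Q. orthogonal_matrix Q} = 1 \<and>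
     (\<forall>Q. orthogonal_matrix Q \<longrightarrow>
        distr H H (\<lambda>A. Q ** A) = H \<and> distr H H (\<lambda>A. A ** Q) = H)"

definition haar_unitary :: "(complex^'n^'n) measure \<Rightarrow> bool" where
  "haar_unitary H \<longleftrightarrow> sets H = sets borel \<and> prob_space H \<and>
     measure H {Q. unitary_matrix Q} = 1 \<and>
     (\<forall>Q. unitary_matrix Q \<longrightarrow>
        distr H H (\<lambda>A. Q ** A) = H \<and> distr H H (\<lambda>A. A ** Q) = H)"

definition tv_dist :: "'a measure \<Rightarrow> 'a measure \<Rightarrow> real" where
  "tv_dist M N = (SUP A\<in>sets M. \<bar>measure M A - measure N A\<bar>)"

end

theory Submission
  imports Defs "HOL-Analysis.Analysis"
begin

(* ---- part A1 ---- *)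


definition conjf :: "('k::real_normed_field \<Rightarrow> 'k) \<Rightarrow> bool" where
 "conjf cj \<longleftrightarrow> (\<forall>x y. cj (x+y) = cj x + cj y) \<and> (\<forall>x y. cj (x*y) = cj x * cj y)
   \<and> (\<forall>x. cj (cj x) = x) \<and> (\<forall>r. cj (of_real r) = of_real r)
   \<and> (\<forall>x. cj x * x = of_real ((norm x)^2)) \<and> continuous_on UNIV cj"

lemma conjf_id: "conjf (id :: real \<Rightarrow> real)"
  unfolding conjf_def by (auto simp: power2_eq_square continuous_on_id)

lemma conjf_cnj: "conjf cnj"
  unfolding conjf_def
  by (auto simp: complex_norm_square mult.commute simp del: of_real_power intro: linear_continuous_on bounded_linear_cnj)

definition hp :: "('k::real_normed_field \<Rightarrow> 'k) \<Rightarrow> 'k^'n \<Rightarrow> 'k^'n \<Rightarrow> 'k" where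
  "hp cj u v = (\<Sum>i\<in>UNIV. cj (u$i) * v$i)"

definition adj :: "('k::real_normed_field \<Rightarrow> 'k) \<Rightarrow> 'k^'n^'n \<Rightarrow> 'k^'n^'n" where
  "adj cj A = (\<chi> i j. cj (A$j$i))"

definition unitg :: "('k::real_normed_field \<Rightarrow> 'k) \<Rightarrow> 'k^'n^'n \<Rightarrow> bool" where
  "unitg cj Q \<longleftrightarrow> adj cj Q ** Q = mat 1 \<and> Q ** adj cj Q = mat 1"

definition posd :: "'k::real_normed_field^'n^'n \<Rightarrow> bool" where
  "posd R \<longleftrightarrow> (\<forall>i. \<exists>r>0. R$i$i = of_real r)"

definition qrg :: "('k::real_normed_field \<Rightarrow> 'k) \<Rightarrow> 'k^('n::{finite,linorder})^('n::{finite,linorder}) \<Rightarrow> 'k^('n::{finite,linorder})^('n::{finite,linorder})" where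
  "qrg cj A = (THE Q. unitg cj Q \<and> (\<exists>R. upper_triangular R \<and> posd R \<and> A = Q ** R))"

lemma fin_lin_induct:
  fixes j :: "'n::{finite,linorder}"
  assumes "\<And>j. (\<And>i. i < j \<Longrightarrow> P i) \<Longrightarrow> P j"
  shows "P j"
proof (induction j rule: measure_induct_rule[where f="\<lambda>j. card {i::'n. i < j}"])
  case (less j)
  show ?case
  proof (rule assms)
    fix i assume "i < j"
    then have "{i'. i' < i} \<subset> {i'. i' < j}" using \<open>i < j\<close> by auto
    then have "card {i'. i' < i} < card {i'. i' < j}" by (rule psubset_card_mono[rotated]) simp
    then show "P i" by (rule less)
  qed
qed

lemma fin_lin_induct_down:
  fixes j :: "'n::{finite,linorder}"
  assumes "\<And>j. (\<And>i. j < i \<Longrightarrow> P i) \<Longrightarrow> P j"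
  shows "P j"
proof (induction j rule: measure_induct_rule[where f="\<lambda>j. card {i::'n. j < i}"])
  case (less j)
  show ?case
  proof (rule assms)
    fix i assume "j < i"
    then have "{i'. i < i'} \<subset> {i'. j < i'}" by auto
    then have "card {i'. i < i'} < card {i'. j < i'}" by (rule psubset_card_mono[rotated]) simp
    then show "P i" by (rule less)
  qed
qed

locale cjl =
  fixes cj :: "'k::real_normed_field \<Rightarrow> 'k"
  assumes cj: "conjf cj"
begin

lemma cj_add: "cj (x + y) = cj x + cj y" using cj unfolding conjf_def by blast
lemma cj_mult: "cj (x * y) = cj x * cj y" using cj unfolding conjf_def by blast
lemma cj_cj[simp]: "cj (cj x) = x" using cj unfolding conjf_def by blast
lemma cj_of_real[simp]: "cj (of_real r) = of_real r" using cj unfolding conjf_def by blast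
lemma cj_norm: "cj x * x = of_real ((norm x)^2)" using cj unfolding conjf_def by blast
lemma cj_cont: "continuous_on UNIV cj" using cj unfolding conjf_def by blast
lemma cj_zero[simp]: "cj 0 = 0" using cj_of_real[of 0] by simp
lemma cj_one[simp]: "cj 1 = 1" using cj_of_real[of 1] by simp
lemma cj_minus: "cj (- x) = - cj x"
proof -
  have "cj x + cj (-x) = 0" using cj_add[of x "-x"] by simp
  then show ?thesis by (metis minus_unique)
qed
lemma cj_diff: "cj (x - y) = cj x - cj y"
  using cj_add[of x "-y"] cj_minus[of y] by simp
lemma cj_sum: "cj (sum f S) = (\<Sum>i\<in>S. cj (f i))"
  by (induction S rule: infinite_finite_induct) (auto simp: cj_add)

lemma hp_sym: "hp cj u v = cj (hp cj v u)"
  unfolding hp_def cj_sum by (simp add: cj_mult mult.commute)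

lemma hp_add_right: "hp cj u (v + w) = hp cj u v + hp cj u w"
  unfolding hp_def by (simp add: distrib_left sum.distrib)
lemma hp_diff_right: "hp cj u (v - w) = hp cj u v - hp cj u w"
  unfolding hp_def by (simp add: right_diff_distrib sum_subtractf)
lemma hp_scale_right: "hp cj u (c *s v) = c * hp cj u v"
  unfolding hp_def by (simp add: sum_distrib_left mult.left_commute)
lemma hp_sum_right: "hp cj u (sum f S) = (\<Sum>i\<in>S. hp cj u (f i))"
proof -
  have "hp cj u (sum f S) = (\<Sum>i\<in>UNIV. \<Sum>l\<in>S. cj (u$i) * f l $ i)"
    unfolding hp_def by (simp add: sum_component sum_distrib_left)
  also have "\<dots> = (\<Sum>l\<in>S. \<Sum>i\<in>UNIV. cj (u$i) * f l $ i)"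
    by (rule sum.swap)
  finally show ?thesis unfolding hp_def .
qed
lemma hp_scale_left: "hp cj (c *s u) v = cj c * hp cj u v"
  unfolding hp_def by (simp add: sum_distrib_left cj_mult mult.assoc)
lemma hp_zero_left[simp]: "hp cj 0 v = 0" unfolding hp_def by simp

lemma norm_vec_sq: "(norm (v::'a::real_normed_vector^'m))^2 = (\<Sum>i\<in>UNIV. (norm (v$i))^2)"
  unfolding norm_vec_def L2_set_def by (simp add: sum_nonneg)

lemma hp_self: "hp cj v v = of_real ((norm v)^2)"
  unfolding hp_def norm_vec_sq by (simp add: cj_norm)

lemma hp_self_eq0: "hp cj v v = 0 \<longleftrightarrow> v = 0"
  unfolding hp_self by simp

lemma adj_mult_entry: "(adj cj A ** B)$i$j = hp cj (column i A) (column j B)"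
  unfolding adj_def hp_def matrix_matrix_mult_def column_def by simp

lemma adj_adj[simp]: "adj cj (adj cj A) = A"
  unfolding adj_def by (simp add: vec_eq_iff)

lemma adj_mult: "adj cj (A ** B) = adj cj B ** adj cj A"
proof -
  have "adj cj (A ** B) $ i $ j = (adj cj B ** adj cj A) $ i $ j" for i j
    unfolding adj_def matrix_matrix_mult_def
    by (simp add: cj_sum cj_mult mult.commute)
  then show ?thesis by (simp add: vec_eq_iff)
qed

lemma adj_mat1[simp]: "adj cj (mat 1) = mat 1"
  unfolding adj_def mat_def by (simp add: vec_eq_iff)

lemma unitg_left: "unitg cj Q \<longleftrightarrow> adj cj Q ** Q = mat 1"
  unfolding unitg_def using matrix_left_right_inverse by blast

lemma unitg_mult: "unitg cj P \<Longrightarrow> unitg cj Q \<Longrightarrow> unitg cj (P ** Q)"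
proof -
  assume P: "unitg cj P" and Q: "unitg cj Q"
  have "adj cj (P ** Q) ** (P ** Q) = adj cj Q ** ((adj cj P ** P) ** Q)"
    by (simp add: adj_mult matrix_mul_assoc)
  also have "\<dots> = mat 1" using P Q unfolding unitg_left by (simp add: matrix_mul_lid)
  finally show ?thesis unfolding unitg_left .
qed

lemma unitg_adj: "unitg cj Q \<Longrightarrow> unitg cj (adj cj Q)"
  unfolding unitg_def by simp

lemma unitg_orth: "unitg cj Q \<Longrightarrow> hp cj (column i Q) (column j Q) = (if i = j then 1 else 0)"
  unfolding unitg_left by (simp add: adj_mult_entry[symmetric] mat_def)

lemma column_mult: "column j ((Q::'k^'n^'n) ** R) = (\<Sum>l\<in>UNIV. R$l$j *s column l Q)"
proof -
  have "column j (Q ** R) $ i = (\<Sum>l\<in>UNIV. R$l$j *s column l Q) $ i" for i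
    unfolding column_def matrix_matrix_mult_def sum_component
    by (simp, rule sum.cong) (simp_all add: mult.commute)
  then show ?thesis by (simp add: vec_eq_iff)
qed

lemma hp_orth_sum:
  assumes "\<And>l. l \<in> S \<Longrightarrow> hp cj u (q l) = (if l = i then 1 else 0)" "finite S"
  shows "hp cj u (\<Sum>l\<in>S. c l *s q l) = (if i \<in> S then c i else 0)"
proof -
  have "hp cj u (\<Sum>l\<in>S. c l *s q l) = (\<Sum>l\<in>S. c l * hp cj u (q l))"
    by (simp add: hp_sum_right hp_scale_right)
  also have "\<dots> = (\<Sum>l\<in>S. if l = i then c l else 0)"
    using assms(1) by (intro sum.cong) auto
  also have "\<dots> = (if i \<in> S then c i else 0)"
    using assms(2) by (simp add: sum.delta')
  finally show ?thesis .
qed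

end

(* ---- part B1 ---- *)


definition rk :: "'n::{finite,linorder} \<Rightarrow> nat" where "rk j = card {i. i < j}"

definition nrm :: "'k::real_normed_field^'n \<Rightarrow> 'k^'n" where
  "nrm v = of_real (1 / norm v) *s v"

primrec gsv :: "('k::real_normed_field \<Rightarrow> 'k) \<Rightarrow> 'k^('n::{finite,linorder})^('n::{finite,linorder}) \<Rightarrow> nat \<Rightarrow> ('n::{finite,linorder}) \<Rightarrow> 'k^('n::{finite,linorder})" where
  "gsv cj A 0 = (\<lambda>j. 0)"
| "gsv cj A (Suc k) = (\<lambda>j. if rk j = k then nrm (column j A - (\<Sum>i\<in>{i. rk i < k}. hp cj (gsv cj A k i) (column j A) *s gsv cj A k i)) else gsv cj A k j)"

definition gsq :: "('k::real_normed_field \<Rightarrow> 'k) \<Rightarrow> 'k^('n::{finite,linorder})^('n::{finite,linorder}) \<Rightarrow> ('n::{finite,linorder}) \<Rightarrow> 'k^('n::{finite,linorder})" where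
  "gsq cj A j = gsv cj A (Suc (rk j)) j"

definition gsres :: "('k::real_normed_field \<Rightarrow> 'k) \<Rightarrow> 'k^('n::{finite,linorder})^('n::{finite,linorder}) \<Rightarrow> ('n::{finite,linorder}) \<Rightarrow> 'k^('n::{finite,linorder})" where
  "gsres cj A j = column j A - (\<Sum>i\<in>{i. i < j}. hp cj (gsq cj A i) (column j A) *s gsq cj A i)"

definition gsQ :: "('k::real_normed_field \<Rightarrow> 'k) \<Rightarrow> 'k^('n::{finite,linorder})^('n::{finite,linorder}) \<Rightarrow> 'k^('n::{finite,linorder})^('n::{finite,linorder})" where
  "gsQ cj A = (\<chi> i j. gsq cj A j $ i)"

lemma rk_less: "i < j \<Longrightarrow> rk i < rk j"
proof -
  assume "i < j"
  then have "{i'. i' < i} \<subset> {i'. i' < j}" by auto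
  then show ?thesis unfolding rk_def by (rule psubset_card_mono[rotated]) simp
qed

lemma rk_less_iff: "rk i < rk j \<longleftrightarrow> i < j"
  by (metis rk_less less_asym not_less_iff_gr_or_eq)

lemma gsv_stable: "rk i < k \<Longrightarrow> gsv cj A k i = gsv cj A (Suc (rk i)) i"
proof (induction k)
  case 0 then show ?case by simp
next
  case (Suc k)
  show ?case
  proof (cases "rk i = k")
    case True then show ?thesis by simp
  next
    case False
    then have "rk i < k" using Suc.prems by simp
    then show ?thesis using Suc.IH False by simp
  qed
qed

lemma gsq_eq: "gsq cj A j = nrm (gsres cj A j)"
proof -
  have "gsq cj A j = nrm (column j A - (\<Sum>i\<in>{i. rk i < rk j}. hp cj (gsv cj A (rk j) i) (column j A) *s gsv cj A (rk j) i))"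
    unfolding gsq_def by simp
  also have "{i. rk i < rk j} = {i. i < j}" by (simp add: rk_less_iff)
  also have "(\<Sum>i\<in>{i. i < j}. hp cj (gsv cj A (rk j) i) (column j A) *s gsv cj A (rk j) i)
      = (\<Sum>i\<in>{i. i < j}. hp cj (gsq cj A i) (column j A) *s gsq cj A i)"
    by (rule sum.cong[OF refl]) (metis (mono_tags) gsq_def gsv_stable mem_Collect_eq rk_less)
  finally show ?thesis unfolding gsres_def .
qed

lemma column_gsQ[simp]: "column j (gsQ cj A) = gsq cj A j"
  unfolding gsQ_def column_def by (simp add: vec_eq_iff)

lemma ut_inj:
  fixes R :: "'k::field^('n::{finite,linorder})^('n::{finite,linorder})"
  assumes ut: "upper_triangular R" and d: "\<And>i. R$i$i \<noteq> 0" and z: "R *v w = 0"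
  shows "w = 0"
proof -
  have "w $ j = 0" for j
  proof (induction j rule: fin_lin_induct_down)
    fix j assume IH: "\<And>i. j < i \<Longrightarrow> w $ i = 0"
    have "0 = (R *v w) $ j" using z by simp
    also have "\<dots> = (\<Sum>l\<in>UNIV. R$j$l * w$l)" by (simp add: matrix_vector_mult_def)
    also have "\<dots> = R$j$j * w$j + (\<Sum>l\<in>UNIV-{j}. R$j$l * w$l)"
      by (simp add: sum.remove)
    also have "(\<Sum>l\<in>UNIV-{j}. R$j$l * w$l) = 0"
    proof (rule sum.neutral, rule ballI)
      fix l assume "l \<in> UNIV - {j}"
      then have "l < j \<or> j < l" by auto
      then show "R$j$l * w$l = 0"
        using IH ut unfolding upper_triangular_def by auto
    qed
    finally show "w $ j = 0" using d[of j] by simp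
  qed
  then show ?thesis by (simp add: vec_eq_iff)
qed

context cjl begin

lemma hp_col_mult: "unitg cj Q \<Longrightarrow> hp cj (column i Q) (column j (Q ** R)) = R$i$j"
proof -
  assume Q: "unitg cj Q"
  have "hp cj (column i Q) (column j (Q ** R)) = hp cj (column i Q) (\<Sum>l\<in>UNIV. R$l$j *s column l Q)"
    by (simp add: column_mult)
  also have "\<dots> = R$i$j"
    by (subst hp_orth_sum[where i=i]) (auto simp: unitg_orth[OF Q])
  finally show ?thesis .
qed

lemma qr_unique:
  assumes Q1: "unitg cj Q1" and Q2: "unitg cj Q2"
    and R1: "upper_triangular R1" "posd R1" and R2: "upper_triangular R2" "posd R2"
    and eq: "Q1 ** R1 = Q2 ** R2"
  shows "Q1 = Q2"
proof -
  have R1e: "R1$i$j = hp cj (column i Q1) (column j (Q1 ** R1))" for i j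
    by (rule hp_col_mult[OF Q1, symmetric])
  have R2e: "R2$i$j = hp cj (column i Q2) (column j (Q1 ** R1))" for i j
    unfolding eq by (rule hp_col_mult[OF Q2, symmetric])
  have col: "column j Q1 = column j Q2" for j
  proof (induction j rule: fin_lin_induct)
    fix j assume IH: "\<And>i. i < j \<Longrightarrow> column i Q1 = column i Q2"
    have Req: "R1$i$j = R2$i$j" if "i < j" for i using IH[OF that] R1e R2e by simp
    define D where "D = (\<Sum>l\<in>UNIV-{j}. R1$l$j *s column l Q1)"
    have D2: "D = (\<Sum>l\<in>UNIV-{j}. R2$l$j *s column l Q2)"
      unfolding D_def
    proof (rule sum.cong[OF refl])
      fix l assume "l \<in> UNIV - {j}"
      then have "l < j \<or> j < l" by auto
      then show "R1$l$j *s column l Q1 = R2$l$j *s column l Q2"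
      proof
        assume "l < j" then show ?thesis using Req IH by simp
      next
        assume "j < l" then show ?thesis using R1(1) R2(1) unfolding upper_triangular_def by simp
      qed
    qed
    have a1: "column j (Q1 ** R1) = R1$j$j *s column j Q1 + D"
      unfolding column_mult D_def by (simp add: sum.remove)
    have a2: "column j (Q1 ** R1) = R2$j$j *s column j Q2 + D"
      unfolding eq column_mult D2 by (simp add: sum.remove)
    have e: "R1$j$j *s column j Q1 = R2$j$j *s column j Q2" using a1 a2 by simp
    obtain r1 where r1: "r1 > 0" "R1$j$j = of_real r1" using R1(2) unfolding posd_def by blast
    obtain r2 where r2: "r2 > 0" "R2$j$j = of_real r2" using R2(2) unfolding posd_def by blast
    have h1: "hp cj (R1$j$j *s column j Q1) (R1$j$j *s column j Q1) = of_real (r1*r1)"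
      using r1 by (simp add: hp_scale_left hp_scale_right unitg_orth[OF Q1])
    have h2: "hp cj (R2$j$j *s column j Q2) (R2$j$j *s column j Q2) = of_real (r2*r2)"
      using r2 by (simp add: hp_scale_left hp_scale_right unitg_orth[OF Q2])
    have "r1 * r1 = r2 * r2" using h1 h2 e by (metis of_real_eq_iff)
    then have "(r1 - r2) * (r1 + r2) = 0" by (simp add: algebra_simps)
    then have "r1 = r2" using r1 r2 by simp
    then show "column j Q1 = column j Q2" using e r1 r2 by (simp add: vector_mul_lcancel)
  qed
  show ?thesis
  proof -
    have "Q1 $ i $ j = Q2 $ i $ j" for i j
      using arg_cong[OF col[of j], of "\<lambda>v. v $ i"] by (simp add: column_def)
    then show ?thesis by (simp add: vec_eq_iff)
  qed
qed

lemma qr_imp_inj: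
  assumes Q: "unitg cj Q" and R: "upper_triangular R" "posd R" and A: "A = Q ** R"
    and w: "A *v w = 0"
  shows "w = 0"
proof -
  have "adj cj Q ** A = R" using Q unfolding A unitg_left
    by (simp add: matrix_mul_assoc matrix_mul_lid)
  then have "R *v w = 0" using w by (metis matrix_vector_mul_assoc matrix_vector_mult_0_right)
  moreover have "R$i$i \<noteq> 0" for i using R(2) unfolding posd_def
    by (metis of_real_eq_0_iff order_less_irrefl)
  ultimately show ?thesis using ut_inj[OF R(1)] by blast
qed

end

(* ---- part B2 ---- *)


lemma mvb: "(A::'a::semiring_1^'n^'m) *v axis j 1 = column j A"
  by (simp add: vec_eq_iff matrix_vector_mult_def column_def axis_def if_distrib sum.delta' cong: if_cong)

context cjl begin

lemma gs_main:
  fixes A :: "'k^('n::{finite,linorder})^('n::{finite,linorder})"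
  assumes inj: "\<And>w. A *v w = 0 \<Longrightarrow> w = 0"
  shows "gsres cj A j \<noteq> 0 \<and> hp cj (gsq cj A j) (gsq cj A j) = 1
    \<and> (\<forall>i<j. hp cj (gsq cj A i) (gsq cj A j) = 0)
    \<and> (\<exists>t. (\<forall>l. \<not> l \<le> j \<longrightarrow> t$l = 0) \<and> gsq cj A j = A *v t)"
proof (induction j rule: fin_lin_induct)
  fix j :: 'n
  assume IH: "\<And>i. i < j \<Longrightarrow> gsres cj A i \<noteq> 0 \<and> hp cj (gsq cj A i) (gsq cj A i) = 1
    \<and> (\<forall>i'<i. hp cj (gsq cj A i') (gsq cj A i) = 0)
    \<and> (\<exists>t. (\<forall>l. \<not> l \<le> i \<longrightarrow> t$l = 0) \<and> gsq cj A i = A *v t)"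
  define q where "q = gsq cj A"
  define a where "a = column j A"
  define c where "c i = hp cj (q i) a" for i
  define v where "v = gsres cj A j"
  define S where "S = {i. i < j}"
  have v_def': "v = a - (\<Sum>i\<in>S. c i *s q i)"
    unfolding v_def gsres_def a_def c_def q_def S_def ..
  have orth: "hp cj (q i) (q l) = (if l = i then 1 else 0)" if "i < j" "l < j" for i l
  proof -
    consider "l = i" | "l < i" | "i < l" by fastforce
    then show ?thesis
    proof cases
      case 1 then show ?thesis using IH[OF that(1)] q_def by simp
    next
      case 2
      then have "hp cj (q l) (q i) = 0" using IH[OF that(1)] q_def by simp
      then show ?thesis using 2 hp_sym[of "q i" "q l"] by simp
    next
      case 3
      then show ?thesis using IH[OF that(2)] q_def by simp
    qed
  qed
  have "\<forall>i. \<exists>t. i < j \<longrightarrow> (\<forall>l. \<not> l \<le> i \<longrightarrow> t$l = 0) \<and> q i = A *v t"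
    using IH q_def by blast
  then obtain T where T: "\<And>i. i < j \<Longrightarrow> (\<forall>l. \<not> l \<le> i \<longrightarrow> T i $ l = 0) \<and> q i = A *v T i"
    by metis
  define w where "w = axis j 1 - (\<Sum>i\<in>S. c i *s T i)"
  have vw: "v = A *v w"
  proof -
    have "A *v w = a - (\<Sum>i\<in>S. c i *s (A *v T i))"
      unfolding w_def a_def by (simp add: vec.diff vec.sum vec.scale mvb)
    also have "(\<Sum>i\<in>S. c i *s (A *v T i)) = (\<Sum>i\<in>S. c i *s q i)"
      by (rule sum.cong[OF refl]) (use T S_def in auto)
    finally show ?thesis using v_def' by simp
  qed
  have wj: "w $ j = 1"
  proof -
    have "(\<Sum>i\<in>S. c i *s T i) $ j = (\<Sum>i\<in>S. c i * T i $ j)" by (simp add: sum_component)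
    also have "\<dots> = 0" by (rule sum.neutral) (use T S_def in auto)
    finally show ?thesis unfolding w_def by simp
  qed
  have v0: "v \<noteq> 0"
  proof
    assume "v = 0"
    then have "w = 0" using inj vw by simp
    then show False using wj by simp
  qed
  have nv: "norm v > 0" using v0 by simp
  have qj: "q j = of_real (1 / norm v) *s v"
    unfolding q_def v_def by (simp add: gsq_eq nrm_def)
  have unit: "hp cj (q j) (q j) = 1"
  proof -
    have "hp cj (q j) (q j) = cj (of_real (1/norm v)) * (of_real (1/norm v) * hp cj v v)"
      unfolding qj hp_scale_left hp_scale_right by (simp only: mult.left_commute)
    also have "\<dots> = of_real (1/norm v * (1/norm v * (norm v)^2))"
      by (simp only: cj_of_real hp_self of_real_mult)
    also have "\<dots> = 1" using nv by (simp add: power2_eq_square)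
    finally show ?thesis .
  qed
  have perp: "hp cj (q i) (q j) = 0" if "i < j" for i
  proof -
    have "hp cj (q i) v = c i - hp cj (q i) (\<Sum>l\<in>S. c l *s q l)"
      unfolding v_def' c_def by (simp add: hp_diff_right)
    also have "hp cj (q i) (\<Sum>l\<in>S. c l *s q l) = c i"
      by (subst hp_orth_sum[where i=i]) (use orth that S_def in auto)
    finally have "hp cj (q i) v = 0" by simp
    then show ?thesis unfolding qj by (simp add: hp_scale_right)
  qed
  have tj: "(\<forall>l. \<not> l \<le> j \<longrightarrow> (of_real (1 / norm v) *s w) $ l = 0) \<and> q j = A *v (of_real (1 / norm v) *s w)"
  proof
    show "\<forall>l. \<not> l \<le> j \<longrightarrow> (of_real (1 / norm v) *s w) $ l = 0"
    proof (intro allI impI)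
      fix l assume l: "\<not> l \<le> j"
      have "(\<Sum>i\<in>S. c i *s T i) $ l = (\<Sum>i\<in>S. c i * T i $ l)" by (simp add: sum_component)
      also have "\<dots> = 0" by (rule sum.neutral) (use T S_def l in auto)
      finally have "w $ l = 0" unfolding w_def using l by (auto simp: axis_def)
      then show "(of_real (1 / norm v) *s w) $ l = 0" by simp
    qed
    show "q j = A *v (of_real (1 / norm v) *s w)"
      unfolding qj vw by (simp add: vec.scale)
  qed
  show "gsres cj A j \<noteq> 0 \<and> hp cj (gsq cj A j) (gsq cj A j) = 1
    \<and> (\<forall>i<j. hp cj (gsq cj A i) (gsq cj A j) = 0)
    \<and> (\<exists>t. (\<forall>l. \<not> l \<le> j \<longrightarrow> t$l = 0) \<and> gsq cj A j = A *v t)"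
    using v0 unit perp tj unfolding v_def q_def by blast
qed

lemma gs_orth:
  fixes A :: "'k^('n::{finite,linorder})^('n::{finite,linorder})"
  assumes inj: "\<And>w. A *v w = 0 \<Longrightarrow> w = 0"
  shows "hp cj (gsq cj A i) (gsq cj A j) = (if i = j then 1 else 0)"
proof -
  consider "i = j" | "i < j" | "j < i" by fastforce
  then show ?thesis
  proof cases
    case 1 then show ?thesis using gs_main[OF inj, where j=i] by simp
  next
    case 2 then show ?thesis using gs_main[OF inj, where j=j] by simp
  next
    case 3
    then have "hp cj (gsq cj A j) (gsq cj A i) = 0" using gs_main[OF inj, where j=i] by simp
    then show ?thesis using 3 hp_sym[of "gsq cj A i" "gsq cj A j"] by simp
  qed
qed

lemma gs_decomp:
  fixes A :: "'k^('n::{finite,linorder})^('n::{finite,linorder})"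
  assumes inj: "\<And>w. A *v w = 0 \<Longrightarrow> w = 0"
  shows "column j A = (\<Sum>i\<in>{i. i < j}. hp cj (gsq cj A i) (column j A) *s gsq cj A i)
           + of_real (norm (gsres cj A j)) *s gsq cj A j"
proof -
  have nv: "norm (gsres cj A j) > 0" using gs_main[OF inj, where j=j] by simp
  have "of_real (norm (gsres cj A j)) *s gsq cj A j = gsres cj A j"
    using nv by (simp add: gsq_eq nrm_def scalar_mult_eq_scaleR[symmetric] of_real_mult[symmetric])
  then show ?thesis unfolding gsres_def by simp
qed

lemma gs_qr:
  fixes A :: "'k^('n::{finite,linorder})^('n::{finite,linorder})"
  assumes inj: "\<And>w. A *v w = 0 \<Longrightarrow> w = 0"
  shows "unitg cj (gsQ cj A) \<and> upper_triangular (adj cj (gsQ cj A) ** A)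
     \<and> posd (adj cj (gsQ cj A) ** A) \<and> A = gsQ cj A ** (adj cj (gsQ cj A) ** A)"
proof -
  have U: "unitg cj (gsQ cj A)"
    unfolding unitg_left by (simp add: vec_eq_iff adj_mult_entry gs_orth[OF inj] mat_def)
  have entry: "(adj cj (gsQ cj A) ** A) $ i $ j
      = (if i < j then hp cj (gsq cj A i) (column j A) else 0)
        + of_real (norm (gsres cj A j)) * (if i = j then 1 else 0)" for i j
  proof -
    have "(adj cj (gsQ cj A) ** A) $ i $ j = hp cj (gsq cj A i) (column j A)"
      by (simp add: adj_mult_entry)
    also have "\<dots> = hp cj (gsq cj A i) ((\<Sum>l\<in>{l. l < j}. hp cj (gsq cj A l) (column j A) *s gsq cj A l)
           + of_real (norm (gsres cj A j)) *s gsq cj A j)"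
      using gs_decomp[OF inj, where j=j] by (metis (no_types, lifting))
    also have "\<dots> = hp cj (gsq cj A i) (\<Sum>l\<in>{l. l < j}. hp cj (gsq cj A l) (column j A) *s gsq cj A l)
           + of_real (norm (gsres cj A j)) * hp cj (gsq cj A i) (gsq cj A j)"
      by (simp only: hp_add_right hp_scale_right)
    also have "hp cj (gsq cj A i) (\<Sum>l\<in>{l. l < j}. hp cj (gsq cj A l) (column j A) *s gsq cj A l)
        = (if i < j then hp cj (gsq cj A i) (column j A) else 0)"
      by (subst hp_orth_sum[where i=i]) (auto simp: gs_orth[OF inj])
    finally show ?thesis by (simp add: gs_orth[OF inj])
  qed
  have ut: "upper_triangular (adj cj (gsQ cj A) ** A)"
    unfolding upper_triangular_def entry by auto
  have pd: "posd (adj cj (gsQ cj A) ** A)"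
    unfolding posd_def entry using gs_main[OF inj] by auto
  have eq: "A = gsQ cj A ** (adj cj (gsQ cj A) ** A)"
    using U unfolding unitg_def by (simp add: matrix_mul_assoc matrix_mul_lid)
  show ?thesis using U ut pd eq by blast
qed

lemma qrg_eq:
  fixes A :: "'k^('n::{finite,linorder})^('n::{finite,linorder})"
  assumes inj: "\<And>w. A *v w = 0 \<Longrightarrow> w = 0"
  shows "qrg cj A = gsQ cj A"
  unfolding qrg_def
proof (rule the_equality)
  show "unitg cj (gsQ cj A) \<and> (\<exists>R. upper_triangular R \<and> posd R \<and> A = gsQ cj A ** R)"
    using gs_qr[OF inj] by blast
  fix Q assume "unitg cj Q \<and> (\<exists>R. upper_triangular R \<and> posd R \<and> A = Q ** R)"
  then obtain R where "unitg cj Q" "upper_triangular R" "posd R" "A = Q ** R" by blast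
  then show "Q = gsQ cj A" using gs_qr[OF inj] qr_unique by metis
qed

lemma qrg_prop:
  fixes A :: "'k^('n::{finite,linorder})^('n::{finite,linorder})"
  assumes inj: "\<And>w. A *v w = 0 \<Longrightarrow> w = 0"
  shows "unitg cj (qrg cj A) \<and> (\<exists>R. upper_triangular R \<and> posd R \<and> A = qrg cj A ** R)"
  using gs_qr[OF inj] qrg_eq[OF inj] by metis

lemma qrg_bad:
  fixes A :: "'k^('n::{finite,linorder})^('n::{finite,linorder})"
  assumes ninj: "\<not> (\<forall>w. A *v w = 0 \<longrightarrow> w = 0)"
  shows "qrg cj A = (THE Q. False)"
proof -
  have "(\<lambda>Q. unitg cj Q \<and> (\<exists>R. upper_triangular R \<and> posd R \<and> A = Q ** R)) = (\<lambda>Q. False)"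
    using ninj qr_imp_inj by blast
  then show ?thesis unfolding qrg_def by simp
qed

lemma qrg_equivariant:
  fixes A :: "'k^('n::{finite,linorder})^('n::{finite,linorder})"
  assumes inj: "\<And>w. A *v w = 0 \<Longrightarrow> w = 0" and U: "unitg cj U"
  shows "qrg cj (U ** A) = U ** qrg cj A"
proof -
  obtain R where R: "upper_triangular R" "posd R" "A = qrg cj A ** R" and Q: "unitg cj (qrg cj A)"
    using qrg_prop[OF inj] by blast
  have inj2: "w = 0" if "(U ** A) *v w = 0" for w
  proof -
    have "adj cj U *v ((U ** A) *v w) = A *v w"
      using U unfolding unitg_def by (simp add: matrix_vector_mul_assoc matrix_mul_assoc matrix_mul_lid)
    then show ?thesis using that inj by simp
  qed
  have "U ** A = (U ** qrg cj A) ** R" using R(3) by (metis matrix_mul_assoc)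
  then show ?thesis
    using qrg_prop[OF inj2] qr_unique[OF _ unitg_mult[OF U Q] _ _ R(1,2)] by metis
qed

lemma qrg_scale:
  fixes A :: "'k^('n::{finite,linorder})^('n::{finite,linorder})"
  assumes inj: "\<And>w. A *v w = 0 \<Longrightarrow> w = 0" and c: "c > 0"
  shows "qrg cj (c *\<^sub>R A) = qrg cj A"
proof -
  obtain R where R: "upper_triangular R" "posd R" "A = qrg cj A ** R" and Q: "unitg cj (qrg cj A)"
    using qrg_prop[OF inj] by blast
  have inj2: "w = 0" if "(c *\<^sub>R A) *v w = 0" for w
  proof -
    have "(c *\<^sub>R A) *v w = c *\<^sub>R (A *v w)"
      by (simp add: vec_eq_iff matrix_vector_mult_def scaleR_sum_right)
    then show ?thesis using that inj c by simp
  qed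
  have e: "c *\<^sub>R A = qrg cj A ** (c *\<^sub>R R)"
    by (subst R(3)) (simp add: vec_eq_iff matrix_matrix_mult_def scaleR_sum_right)
  have "upper_triangular (c *\<^sub>R R)" using R(1) unfolding upper_triangular_def by simp
  moreover have "posd (c *\<^sub>R R)" using R(2) c unfolding posd_def
    by (metis mult_pos_pos of_real_mult scaleR_conv_of_real vector_scaleR_component)
  ultimately show ?thesis
    using qrg_prop[OF inj2] qr_unique[OF _ Q _ _ _ _] e by metis
qed

end

(* ---- part B3 ---- *)


lemma cont_entry: "continuous_on S (\<lambda>A::'a::real_normed_vector^'n^'m. A $ i $ j)"
  by (intro continuous_on_component continuous_on_id)

lemma cont_column: "continuous_on S (\<lambda>A::'a::real_normed_vector^'n^'m. column j A)"
  unfolding column_def by (intro continuous_on_vec_lambda cont_entry)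

lemma cont_det: "continuous_on S (\<lambda>A::'k::real_normed_field^'n^'n. det A)"
  unfolding det_def
  by (intro continuous_on_sum continuous_on_mult continuous_on_const continuous_on_prod cont_entry)

lemma inj_iff_det:
  fixes A :: "'k::field^'n^'n"
  shows "(\<forall>w. A *v w = 0 \<longrightarrow> w = 0) \<longleftrightarrow> det A \<noteq> 0"
proof
  assume H: "\<forall>w. A *v w = 0 \<longrightarrow> w = 0"
  have "inj ((*v) A)"
    by (rule injI) (metis H eq_iff_diff_eq_0 vec.diff)
  then have "bij ((*v) A)"
    using vec.linear_inj_imp_surj[OF matrix_vector_mul_linear_gen] by (simp add: bij_def)
  then show "det A \<noteq> 0" by (simp add: invertible_eq_bij[symmetric] invertible_det_nz)
next
  assume "det A \<noteq> 0"
  then obtain B where B: "B ** A = mat 1" using invertible_det_nz invertible_def by blast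
  show "\<forall>w. A *v w = 0 \<longrightarrow> w = 0"
  proof (intro allI impI)
    fix w assume "A *v w = 0"
    then have "B *v (A *v w) = 0" by simp
    then show "w = 0" using B by (simp add: matrix_vector_mul_assoc)
  qed
qed

definition invset :: "('k::real_normed_field^'n^'n) set" where
  "invset = {A. det A \<noteq> 0}"

lemma invset_open: "open (invset :: ('k::real_normed_field^'n^'n) set)"
  unfolding invset_def by (intro open_Collect_neq cont_det continuous_on_const)

lemma invset_borel[measurable]: "(invset :: ('k::real_normed_field^'n^'n) set) \<in> sets borel"
  using invset_open by (rule borel_open)

lemma in_invset: "A \<in> invset \<longleftrightarrow> (\<forall>w. A *v w = 0 \<longrightarrow> w = 0)"
  unfolding invset_def inj_iff_det by simp

context cjl begin

lemma cont_hp: "continuous_on S f \<Longrightarrow> continuous_on S g \<Longrightarrow> continuous_on S (\<lambda>x. hp cj (f x) (g x))"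
  unfolding hp_def
  by (intro continuous_on_sum continuous_on_mult continuous_on_component
      continuous_on_compose2[OF cj_cont]) auto

lemma cont_smult: "continuous_on S (c::_\<Rightarrow>'k) \<Longrightarrow> continuous_on S f \<Longrightarrow> continuous_on S (\<lambda>x. c x *s (f x :: 'k^'n))"
  unfolding vector_scalar_mult_def
  by (intro continuous_on_vec_lambda continuous_on_mult continuous_on_component) auto

lemma cont_nrm: "continuous_on S f \<Longrightarrow> (\<And>x. x \<in> S \<Longrightarrow> f x \<noteq> 0) \<Longrightarrow> continuous_on S (\<lambda>x. nrm (f x :: 'k^'n))"
  unfolding nrm_def
  by (intro cont_smult continuous_on_of_real continuous_on_divide continuous_on_norm continuous_on_const) auto

lemma cont_gsq: "continuous_on (invset :: ('k^('n::{finite,linorder})^('n::{finite,linorder})) set) (\<lambda>A. gsq cj A j)"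
proof (induction j rule: fin_lin_induct)
  fix j :: 'n
  assume IH: "\<And>i. i < j \<Longrightarrow> continuous_on invset (\<lambda>A. gsq cj A i)"
  have "continuous_on invset (\<lambda>A. nrm (gsres cj A j))"
  proof (rule cont_nrm)
    show "continuous_on invset (\<lambda>A. gsres cj A j)"
      unfolding gsres_def
      by (intro continuous_on_diff cont_column continuous_on_sum cont_smult cont_hp IH) auto
    show "gsres cj A j \<noteq> 0" if "A \<in> invset" for A
      using gs_main[where j=j] that in_invset by blast
  qed
  then show "continuous_on invset (\<lambda>A. gsq cj A j)" by (simp add: gsq_eq)
qed

lemma cont_gsQ: "continuous_on (invset :: ('k^('n::{finite,linorder})^('n::{finite,linorder})) set) (\<lambda>A. gsQ cj A)"
  unfolding gsQ_def
  by (intro continuous_on_vec_lambda continuous_on_component cont_gsq)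

lemma qrg_if: "qrg cj A = (if A \<in> invset then gsQ cj A else (THE Q. False))"
  using qrg_eq qrg_bad in_invset by metis

lemma qrg_measurable:
  "(\<lambda>A. qrg cj A) \<in> borel_measurable (borel :: ('k^('n::{finite,linorder})^('n::{finite,linorder})) measure)"
  unfolding qrg_if
  by (rule borel_measurable_continuous_on_if) (auto intro: cont_gsQ continuous_on_const)

end

(* ---- part C1 ---- *)


definition gk :: "'n \<Rightarrow> 'k::real_normed_field^'n^'n \<Rightarrow> 'k^'n^'n" where
  "gk k Y = (\<chi> i j. if j = k then (\<Sum>l\<in>UNIV-{k}. Y$l$k * Y$i$l) else Y$i$j)"

lemma gk_bl: "bounded_linear (\<lambda>Y::'k::real_normed_field^'n^'n. Y $ p $ q)"
  by (rule bounded_linear_compose[OF bounded_linear_vec_nth bounded_linear_vec_nth])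

lemma gk_d: "(\<lambda>Y::'k::real_normed_field^'n^'n. Y $ p $ q) differentiable at a"
  by (rule bounded_linear_imp_differentiable[OF gk_bl])

lemma gk_d2: "(\<lambda>Y::'k::real_normed_field^'n^'n. \<Sum>l\<in>UNIV-{k}. Y$l$k * Y$i$l) differentiable at a"
  apply (rule differentiable_sum)
   apply simp
  apply (rule ballI)
  apply (rule differentiable_mult)
   apply (rule gk_d)
  apply (rule gk_d)
  done

lemma gk_entry_diff:
  "(\<lambda>Y::'k::real_normed_field^'n^'n. gk k Y $ i $ j) differentiable at a"
proof (cases "j = k")
  case True
  have eq: "(\<lambda>Y::'k^'n^'n. gk k Y $ i $ j) = (\<lambda>Y. \<Sum>l\<in>UNIV-{k}. Y$l$k * Y$i$l)"
    using True by (simp add: gk_def)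
  show ?thesis unfolding eq by (rule gk_d2)
next
  case False
  have eq: "(\<lambda>Y::'k^'n^'n. gk k Y $ i $ j) = (\<lambda>Y. Y$i$j)"
    using False by (simp add: gk_def)
  show ?thesis unfolding eq by (rule gk_d)
qed

lemma gk_diff: "(gk k :: 'k::{real_normed_field,euclidean_space}^'n^'n \<Rightarrow> _) differentiable_on S"
  unfolding differentiable_on_def
proof
  fix a assume "a \<in> S"
  show "gk k differentiable at a within S"
  proof (rule differentiable_componentwise_within[THEN iffD2], rule ballI)
    fix b :: "'k^'n^'n" assume "b \<in> Basis"
    then obtain i u where u: "u \<in> Basis" "b = axis i u" unfolding Basis_vec_def by blast
    then obtain j e where e: "e \<in> (Basis::'k set)" "u = axis j e" unfolding Basis_vec_def by blast
    have eq: "(\<lambda>x. gk k x \<bullet> b) = (\<lambda>x. (gk k x $ i $ j) \<bullet> e)"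
      unfolding u(2) e(2) inner_axis ..
    show "(\<lambda>x. gk k x \<bullet> b) differentiable at a within S"
      unfolding eq
      by (rule differentiable_compose[where f="\<lambda>z. z \<bullet> e"],
          rule bounded_linear_imp_differentiable[OF bounded_linear_inner_left],
          rule differentiable_at_withinI, rule gk_entry_diff)
  qed
qed

lemma negl_diag0: "negligible {Y :: 'k::{real_normed_field,euclidean_space}^'n^'n. Y$k$k = 0}"
proof -
  let ?a = "axis k (axis k (1::'k)) :: 'k^'n^'n"
  have "?a \<noteq> 0" by (simp add: axis_eq_0_iff)
  then have "negligible {Y. ?a \<bullet> Y = 0}" using negligible_hyperplane by blast
  moreover have "{Y :: 'k^'n^'n. Y$k$k = 0} \<subseteq> {Y. ?a \<bullet> Y = 0}"
    by (auto simp: inner_commute[of ?a] inner_axis)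
  ultimately show ?thesis using negligible_subset by blast
qed

lemma noninv_subset:
  "- (invset :: ('k::{real_normed_field,euclidean_space}^'n^'n) set) \<subseteq> (\<Union>k. gk k ` {Y. Y$k$k = 0})"
proof
  fix A :: "'k^'n^'n" assume "A \<in> - invset"
  then obtain w where w: "A *v w = 0" "w \<noteq> 0" using in_invset by blast
  have "\<exists>k. w $ k \<noteq> 0"
  proof (rule ccontr)
    assume "\<not> (\<exists>k. w $ k \<noteq> 0)"
    then have "w = 0" by (simp add: vec_eq_iff)
    then show False using w(2) by simp
  qed
  then obtain k where k: "w $ k \<noteq> 0" by blast
  define d where "d l = - w$l / w$k" for l
  define Y where "Y = (\<chi> i j. if j = k then (if i = k then 0 else d i) else A$i$j)"
  have col: "A$i$k = (\<Sum>l\<in>UNIV-{k}. d l * A$i$l)" for i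
  proof -
    have "(A *v w) $ i = 0" using w(1) by simp
    then have "(\<Sum>l\<in>UNIV. A$i$l * w$l) = 0" unfolding matrix_vector_mult_def by simp
    moreover have "(\<Sum>l\<in>UNIV. A$i$l * w$l) = A$i$k * w$k + (\<Sum>l\<in>UNIV-{k}. A$i$l * w$l)"
      by (simp add: sum.remove)
    ultimately have "A$i$k * w$k = - (\<Sum>l\<in>UNIV-{k}. A$i$l * w$l)"
      by (simp add: eq_neg_iff_add_eq_0)
    then have e1: "A$i$k = - (\<Sum>l\<in>UNIV-{k}. A$i$l * w$l) / w$k"
      using k by (metis minus_divide_left nonzero_mult_div_cancel_right)
    have "(\<Sum>l\<in>UNIV-{k}. d l * A$i$l) = (\<Sum>l\<in>UNIV-{k}. - (A$i$l * w$l) / w$k)"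
      by (rule sum.cong) (simp_all add: d_def)
    also have "\<dots> = - (\<Sum>l\<in>UNIV-{k}. A$i$l * w$l) / w$k"
      by (simp add: sum_divide_distrib sum_negf)
    finally show ?thesis using e1 by simp
  qed
  have "gk k Y $ i $ j = A $ i $ j" for i j
  proof (cases "j = k")
    case True
    have "(\<Sum>l\<in>UNIV-{k}. Y$l$k * Y$i$l) = (\<Sum>l\<in>UNIV-{k}. d l * A$i$l)"
      by (rule sum.cong) (auto simp: Y_def)
    then show ?thesis using True col[of i] by (simp add: gk_def)
  next
    case False then show ?thesis by (simp add: gk_def Y_def)
  qed
  then have "gk k Y = A" by (simp add: vec_eq_iff)
  moreover have "Y$k$k = 0" unfolding Y_def by simp
  ultimately show "A \<in> (\<Union>k. gk k ` {Y. Y$k$k = 0})" by blast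
qed

lemma noninv_negligible: "negligible (- (invset :: ('k::{real_normed_field,euclidean_space}^'n^'n) set))"
proof (rule negligible_subset[OF _ noninv_subset])
  show "negligible (\<Union>k. gk k ` {Y :: 'k^'n^'n. Y$k$k = 0})"
  proof (rule negligible_Union)
    show "finite (range (\<lambda>k. gk k ` {Y :: 'k^'n^'n. Y$k$k = 0}))" by simp
    fix T assume "T \<in> range (\<lambda>k. gk k ` {Y :: 'k^'n^'n. Y$k$k = 0})"
    then obtain k where "T = gk k ` {Y :: 'k^'n^'n. Y$k$k = 0}" by blast
    then show "negligible T"
      using negligible_differentiable_image_negligible[OF order_refl negl_diag0 gk_diff] by blast
  qed
qed

lemma noninv_null: "- (invset :: ('k::{real_normed_field,euclidean_space}^'n^'n) set) \<in> null_sets lborel"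
proof -
  have "- invset \<in> null_sets lebesgue" using noninv_negligible negligible_iff_null_sets by blast
  then show ?thesis by (subst (asm) null_sets_completion_iff) auto
qed

lemma AE_invset: "AE x in lborel. (x::'k::{real_normed_field,euclidean_space}^'n^'n) \<in> invset"
  using noninv_null by (rule AE_I') auto


(* ---- part D1 ---- *)


lemma nn_integral_lborel_shift:
  fixes c :: "'a::euclidean_space"
  assumes [measurable]: "f \<in> borel_measurable borel"
  shows "(\<integral>\<^sup>+y. f (c + y) \<partial>lborel) = (\<integral>\<^sup>+y. f y \<partial>lborel)"
proof -
  have "(\<integral>\<^sup>+y. f y \<partial>lborel) = (\<integral>\<^sup>+y. f y \<partial>(distr lborel borel ((+) c)))"
    by (simp add: lborel_distr_plus)
  also have "\<dots> = (\<integral>\<^sup>+y. f (c + y) \<partial>lborel)"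
    by (rule nn_integral_distr) auto
  finally show ?thesis ..
qed

lemma meas_pair_cont:
  fixes f :: "'a::euclidean_space \<times> 'b::euclidean_space \<Rightarrow> 'c::euclidean_space"
  assumes "continuous_on UNIV f"
  shows "f \<in> borel_measurable (lborel \<Otimes>\<^sub>M lborel)"
proof -
  have sp: "sets (lborel \<Otimes>\<^sub>M lborel) = sets (borel :: ('a \<times> 'b) measure)"
  proof -
    have "sets (lborel \<Otimes>\<^sub>M lborel) = sets ((borel::'a measure) \<Otimes>\<^sub>M (borel::'b measure))"
      by (rule sets_pair_measure_cong) simp_all
    also have "\<dots> = sets (borel :: ('a \<times> 'b) measure)" by (simp only: borel_prod)
    finally show ?thesis .
  qed
  show ?thesis
    by (subst measurable_cong_sets[OF sp refl]) (rule borel_measurable_continuous_onI[OF assms])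
qed

lemma lborel_isometry:
  fixes T Ti :: "'a::euclidean_space \<Rightarrow> 'a"
  assumes lT: "linear T" and inv: "\<And>x. T (Ti x) = x" and iso: "\<And>x. norm (T x) = norm x"
  shows "distr lborel borel T = lborel"
proof -
  have Tm[measurable]: "T \<in> borel_measurable borel"
    using lT by (intro borel_measurable_continuous_onI linear_continuous_on) (simp add: linear_conv_bounded_linear)
  let ?A = "ball (0::'a) 1"
  have lA: "emeasure lborel ?A \<noteq> 0" "emeasure lborel ?A \<noteq> \<infinity>"
  proof -
    have p: "0 < unit_ball_vol (real DIM('a))" by (rule unit_ball_vol_pos) simp
    have e: "emeasure lborel ?A = ennreal (unit_ball_vol (real DIM('a)))"
      using emeasure_ball[of 1 "0::'a"] by simp
    have p': "unit_ball_vol (real DIM('a)) \<noteq> 0" using p by (metis less_irrefl)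
    show "emeasure lborel ?A \<noteq> 0" "emeasure lborel ?A \<noteq> \<infinity>"
      unfolding e using p p' by simp_all
  qed
  have TA: "T -` ?A = ?A" by (auto simp: iso)
  have Ab[measurable]: "?A \<in> sets borel" by simp
  have cT: "continuous_on UNIV T"
    using lT by (intro linear_continuous_on) (simp add: linear_conv_bounded_linear)
  have m1[measurable]: "(\<lambda>z::'a\<times>'a. T (fst z)) \<in> borel_measurable (lborel \<Otimes>\<^sub>M lborel)"
    by (rule meas_pair_cont, rule continuous_on_compose2[OF cT continuous_on_fst[OF continuous_on_id]]) auto
  have m2[measurable]: "(\<lambda>z::'a\<times>'a. T (fst z) + snd z) \<in> borel_measurable (lborel \<Otimes>\<^sub>M lborel)"
    by (rule meas_pair_cont, intro continuous_on_add continuous_on_snd continuous_on_id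
        continuous_on_compose2[OF cT continuous_on_fst[OF continuous_on_id]]) auto
  have m3[measurable]: "(\<lambda>z::'a\<times>'a. T (snd z)) \<in> borel_measurable (lborel \<Otimes>\<^sub>M lborel)"
    by (rule meas_pair_cont, rule continuous_on_compose2[OF cT continuous_on_snd[OF continuous_on_id]]) auto
  have m4[measurable]: "(\<lambda>z::'a\<times>'a. T (snd z) - fst z) \<in> borel_measurable (lborel \<Otimes>\<^sub>M lborel)"
    by (rule meas_pair_cont, intro continuous_on_diff continuous_on_fst continuous_on_id
        continuous_on_compose2[OF cT continuous_on_snd[OF continuous_on_id]]) auto
  show ?thesis
  proof (rule measure_eqI)
    show "sets (distr lborel borel T) = sets lborel" by simp
    fix B assume "B \<in> sets (distr lborel borel T)"
    then have B[measurable]: "B \<in> sets borel" by simp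
    have eqB: "emeasure (distr lborel borel T) B = emeasure lborel (T -` B)"
      by (subst emeasure_distr) auto
    define F where "F x y = (indicator ?A (T x) * indicator B (T x + y) :: ennreal)" for x y
    have Fm: "(\<lambda>(x,y). F x y) \<in> borel_measurable (lborel \<Otimes>\<^sub>M lborel)"
      unfolding F_def split_beta' by measurable
    have I1: "(\<integral>\<^sup>+x. (\<integral>\<^sup>+y. F x y \<partial>lborel) \<partial>lborel) = emeasure lborel ?A * emeasure lborel B"
    proof -
      have "(\<integral>\<^sup>+y. F x y \<partial>lborel) = indicator ?A (T x) * emeasure lborel B" for x
      proof -
        have "(\<integral>\<^sup>+y. F x y \<partial>lborel) = indicator ?A (T x) * (\<integral>\<^sup>+y. indicator B (T x + y) \<partial>lborel)"
          unfolding F_def by (rule nn_integral_cmult) measurable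
        also have "(\<integral>\<^sup>+y. indicator B (T x + y) \<partial>lborel) = (\<integral>\<^sup>+y. indicator B y \<partial>lborel)"
          by (rule nn_integral_lborel_shift) measurable
        finally show ?thesis by simp
      qed
      then have "(\<integral>\<^sup>+x. (\<integral>\<^sup>+y. F x y \<partial>lborel) \<partial>lborel) = (\<integral>\<^sup>+x. indicator (T -` ?A) x * emeasure lborel B \<partial>lborel)"
        by (simp add: indicator_def)
      also have "\<dots> = emeasure lborel (T -` ?A) * emeasure lborel B"
        by (subst nn_integral_multc) (auto simp: TA)
      finally show ?thesis using TA by simp
    qed
    have I2: "(\<integral>\<^sup>+y. (\<integral>\<^sup>+x. F x y \<partial>lborel) \<partial>lborel) = emeasure lborel (T -` B) * emeasure lborel ?A"
    proof -
      define G where "G x y = (indicator ?A (T x - y) * indicator B (T x) :: ennreal)" for x y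
      have Gm: "(\<lambda>(x,y). G y x) \<in> borel_measurable (lborel \<Otimes>\<^sub>M lborel)"
        unfolding G_def split_beta' by measurable
      have "(\<integral>\<^sup>+x. F x y \<partial>lborel) = (\<integral>\<^sup>+x. G x y \<partial>lborel)" for y
      proof -
        have "(\<integral>\<^sup>+x. F x y \<partial>lborel) = (\<integral>\<^sup>+x. F (Ti (-y) + x) y \<partial>lborel)"
          by (rule nn_integral_lborel_shift[symmetric]) (unfold F_def, measurable)
        also have "\<dots> = (\<integral>\<^sup>+x. G x y \<partial>lborel)"
          unfolding F_def G_def by (simp add: linear_add[OF lT] inv)
        finally show ?thesis .
      qed
      then have "(\<integral>\<^sup>+y. (\<integral>\<^sup>+x. F x y \<partial>lborel) \<partial>lborel) = (\<integral>\<^sup>+y. (\<integral>\<^sup>+x. G x y \<partial>lborel) \<partial>lborel)"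
        by simp
      also have "\<dots> = (\<integral>\<^sup>+x. (\<integral>\<^sup>+y. G x y \<partial>lborel) \<partial>lborel)"
        using lborel_pair.Fubini'[of "\<lambda>y x. G x y"] Gm by simp
      also have "\<dots> = (\<integral>\<^sup>+x. indicator (T -` B) x * emeasure lborel ?A \<partial>lborel)"
      proof (rule nn_integral_cong)
        fix x
        have "(\<integral>\<^sup>+y. G x y \<partial>lborel) = (\<integral>\<^sup>+y. indicator ?A (T x - y) \<partial>lborel) * indicator B (T x)"
          unfolding G_def by (rule nn_integral_multc) measurable
        then have "(\<integral>\<^sup>+y. G x y \<partial>lborel) = indicator B (T x) * (\<integral>\<^sup>+y. indicator ?A (T x - y) \<partial>lborel)"
          by (simp add: mult.commute)
        also have "(\<integral>\<^sup>+y. indicator ?A (T x - y) \<partial>lborel) = (\<integral>\<^sup>+y. indicator ?A (- T x + y) \<partial>lborel)"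
          by (rule nn_integral_cong) (simp add: indicator_def dist_norm norm_minus_commute)
        also have "\<dots> = (\<integral>\<^sup>+y. indicator ?A y \<partial>lborel)"
          by (rule nn_integral_lborel_shift) measurable
        also have "\<dots> = emeasure lborel ?A"
          by (rule nn_integral_indicator) simp
        finally show "(\<integral>\<^sup>+y. G x y \<partial>lborel) = indicator (T -` B) x * emeasure lborel ?A"
          by (simp only: indicator_vimage)
      qed
      also have "\<dots> = emeasure lborel (T -` B) * emeasure lborel ?A"
      proof -
        have TB: "T -` B \<in> sets lborel" using measurable_sets_borel[OF Tm B] by simp
        show ?thesis by (subst nn_integral_multc) (simp_all add: nn_integral_indicator[OF TB])
      qed
      finally show ?thesis .
    qed
    have "emeasure lborel ?A * emeasure lborel B = emeasure lborel ?A * emeasure lborel (T -` B)"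
      using I1 I2 lborel_pair.Fubini'[of F] Fm by (simp add: mult.commute)
    then have "emeasure lborel B = emeasure lborel (T -` B)"
      using lA by (simp add: ennreal_mult_cancel_left)
    then show "emeasure (distr lborel borel T) B = emeasure lborel B" using eqB by simp
  qed
qed


(* ---- part D2 ---- *)


definition gdens :: "real \<Rightarrow> 'a::euclidean_space \<Rightarrow> real" where
  "gdens \<sigma> x = (1 / sqrt (2 * pi * \<sigma>\<^sup>2)) ^ DIM('a) * exp (- (norm x)\<^sup>2 / (2 * \<sigma>\<^sup>2))"

lemma gdens_prod: "gdens \<sigma> (x::'a::euclidean_space) = (\<Prod>b\<in>Basis. normal_density 0 \<sigma> (x \<bullet> b))"
proof -
  have n: "(norm x)\<^sup>2 = (\<Sum>b\<in>Basis. (x \<bullet> b)\<^sup>2)"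
    unfolding power2_norm_eq_inner euclidean_inner[of x x] by (simp add: power2_eq_square)
  have "(\<Prod>b\<in>Basis. normal_density 0 \<sigma> (x \<bullet> b))
      = (\<Prod>b\<in>(Basis::'a set). 1 / sqrt (2 * pi * \<sigma>\<^sup>2)) * (\<Prod>b\<in>Basis. exp (- (x \<bullet> b)\<^sup>2 / (2 * \<sigma>\<^sup>2)))"
    by (simp only: normal_density_def diff_zero prod.distrib)
  also have "(\<Prod>b\<in>Basis. exp (- (x \<bullet> b)\<^sup>2 / (2 * \<sigma>\<^sup>2))) = exp (\<Sum>b\<in>Basis. - (x \<bullet> b)\<^sup>2 / (2 * \<sigma>\<^sup>2))"
    by (simp add: exp_sum)
  also have "(\<Sum>b\<in>Basis. - (x \<bullet> b)\<^sup>2 / (2 * \<sigma>\<^sup>2)) = - (norm x)\<^sup>2 / (2 * \<sigma>\<^sup>2)"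
    unfolding n by (simp add: sum_divide_distrib sum_negf)
  finally show ?thesis unfolding gdens_def by simp
qed

lemma gdens_pos: "\<sigma> > 0 \<Longrightarrow> gdens \<sigma> x > 0"
  unfolding gdens_def by simp

lemma gdens_nonneg: "\<sigma> > 0 \<Longrightarrow> gdens \<sigma> x \<ge> 0"
  using gdens_pos[of \<sigma> x] by simp

lemma gdens_cont: "continuous_on UNIV (gdens \<sigma> :: 'a::euclidean_space \<Rightarrow> real)"
  unfolding gdens_def divide_inverse by (intro continuous_intros)

lemma gdens_meas[measurable]: "gdens \<sigma> \<in> borel_measurable (borel :: 'a::euclidean_space measure)"
  by (rule borel_measurable_continuous_onI[OF gdens_cont])

lemma gdens_nn1:
  assumes s: "\<sigma> > 0"
  shows "(\<integral>\<^sup>+x. ennreal (gdens \<sigma> (x::'a::euclidean_space)) \<partial>lborel) = 1"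
proof -
  have "(\<integral>\<^sup>+x. ennreal (gdens \<sigma> (x::'a)) \<partial>lborel) = (\<integral>\<^sup>+x. (\<Prod>b\<in>Basis. ennreal (normal_density 0 \<sigma> ((x::'a) \<bullet> b))) \<partial>lborel)"
    by (simp add: gdens_prod prod_ennreal)
  also have "\<dots> = (\<Prod>b\<in>(Basis::'a set). (\<integral>\<^sup>+t. ennreal (normal_density 0 \<sigma> t) \<partial>lborel))"
    by (rule nn_integral_lborel_prod) auto
  also have "(\<integral>\<^sup>+t. ennreal (normal_density 0 \<sigma> t) \<partial>lborel) = 1"
    using s by (subst nn_integral_eq_integral) (auto simp: integrable_normal_density integral_normal_density)
  finally show ?thesis by simp
qed

lemma gdens_shift_hb:
  assumes s: "\<sigma> > 0"
  shows "has_bochner_integral lborel (\<lambda>x. gdens \<sigma> (c + x :: 'a::euclidean_space)) 1"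
proof (rule has_bochner_integral_nn_integral)
  show "(\<lambda>x. gdens \<sigma> (c + x)) \<in> borel_measurable lborel" by measurable
  show "AE x in lborel. 0 \<le> gdens \<sigma> (c + x)" by (rule AE_I2) (rule gdens_nonneg[OF s])
  have "(\<integral>\<^sup>+x. ennreal (gdens \<sigma> (c + x)) \<partial>lborel) = (\<integral>\<^sup>+x. ennreal (gdens \<sigma> (x::'a)) \<partial>lborel)"
    using nn_integral_lborel_shift[where f="\<lambda>x. ennreal (gdens \<sigma> x)" and c=c] by simp
  then show "(\<integral>\<^sup>+x. ennreal (gdens \<sigma> (c + x)) \<partial>lborel) = ennreal 1"
    using gdens_nn1[OF s] by simp
qed simp

lemma gdens_hb:
  assumes s: "\<sigma> > 0"
  shows "has_bochner_integral lborel (\<lambda>x. gdens \<sigma> (x :: 'a::euclidean_space)) 1"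
  using gdens_shift_hb[OF s, of 0] by simp

lemma gdens_sq_ident:
  fixes x v :: "'a::euclidean_space"
  assumes s: "\<sigma> > 0"
  shows "(gdens \<sigma> (x - v))\<^sup>2 = exp ((norm v)\<^sup>2 / \<sigma>\<^sup>2) * gdens \<sigma> (x - 2 *\<^sub>R v) * gdens \<sigma> x"
proof -
  define K where "K = (1 / sqrt (2 * pi * \<sigma>\<^sup>2)) ^ DIM('a)"
  have e: "- 2 * (norm (x - v))\<^sup>2 = 2 * (norm v)\<^sup>2 - (norm (x - 2 *\<^sub>R v))\<^sup>2 - (norm x)\<^sup>2"
    by (simp add: power2_norm_eq_inner inner_diff_left inner_diff_right inner_commute algebra_simps)
  have "(gdens \<sigma> (x - v))\<^sup>2 = K * K * exp (- 2 * (norm (x - v))\<^sup>2 / (2 * \<sigma>\<^sup>2))"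
    unfolding gdens_def K_def by (simp add: power2_eq_square exp_add[symmetric] field_simps)
  also have "- 2 * (norm (x - v))\<^sup>2 / (2 * \<sigma>\<^sup>2)
      = (norm v)\<^sup>2 / \<sigma>\<^sup>2 + (- (norm (x - 2 *\<^sub>R v))\<^sup>2 / (2 * \<sigma>\<^sup>2)) + (- (norm x)\<^sup>2 / (2 * \<sigma>\<^sup>2))"
    unfolding e using s by (simp add: field_simps)
  also have "K * K * exp \<dots> = exp ((norm v)\<^sup>2 / \<sigma>\<^sup>2) * gdens \<sigma> (x - 2 *\<^sub>R v) * gdens \<sigma> x"
    unfolding gdens_def K_def exp_add by simp
  finally show ?thesis .
qed

lemma amgm_abs:
  fixes d f t :: real
  assumes f: "f > 0" and t: "t > 0"
  shows "\<bar>d\<bar> \<le> t / (2 * f) * d\<^sup>2 + f / (2 * t)"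
proof -
  have "0 \<le> (t * \<bar>d\<bar> - f)\<^sup>2" by simp
  then have "2 * t * f * \<bar>d\<bar> \<le> t\<^sup>2 * d\<^sup>2 + f\<^sup>2"
    by (simp add: power2_eq_square algebra_simps)
  then have "\<bar>d\<bar> \<le> (t\<^sup>2 * d\<^sup>2 + f\<^sup>2) / (2 * t * f)"
    using f t by (simp add: pos_le_divide_eq mult.commute mult.left_commute)
  also have "\<dots> = t / (2 * f) * d\<^sup>2 + f / (2 * t)"
    using f t by (simp add: field_simps power2_eq_square)
  finally show ?thesis .
qed

lemma gauss_L1:
  fixes v :: "'a::euclidean_space"
  assumes s: "\<sigma> > 0" and vs: "norm v \<le> \<sigma>"
  shows "integrable lborel (\<lambda>x. \<bar>gdens \<sigma> (x - v) - gdens \<sigma> x\<bar>)"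
    and "(\<integral>x. \<bar>gdens \<sigma> (x - v) - gdens \<sigma> x\<bar> \<partial>lborel) \<le> 3 / (2 * \<sigma>) * norm v"
proof -
  define f where "f x = gdens \<sigma> x" for x :: 'a
  define g where "g x = gdens \<sigma> (x - v)" for x
  define h where "h x = gdens \<sigma> (x - 2 *\<^sub>R v)" for x
  define E where "E = exp ((norm v)\<^sup>2 / \<sigma>\<^sup>2)"
  have hf: "has_bochner_integral lborel f 1" unfolding f_def by (rule gdens_hb[OF s])
  have hg: "has_bochner_integral lborel g 1"
    using gdens_shift_hb[OF s, of "-v"] unfolding g_def by simp
  have hh: "has_bochner_integral lborel h 1"
    using gdens_shift_hb[OF s, of "-(2 *\<^sub>R v)"] unfolding h_def by simp
  have ig: "integrable lborel (\<lambda>x. \<bar>g x - f x\<bar>)"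
    using hf hg by (intro integrable_abs integrable_diff) (auto simp: has_bochner_integral_iff)
  then show "integrable lborel (\<lambda>x. \<bar>gdens \<sigma> (x - v) - gdens \<sigma> x\<bar>)" unfolding f_def g_def .
  show "(\<integral>x. \<bar>gdens \<sigma> (x - v) - gdens \<sigma> x\<bar> \<partial>lborel) \<le> 3 / (2 * \<sigma>) * norm v"
  proof (cases "v = 0")
    case True then show ?thesis by simp
  next
    case False
    define u where "u = norm v / \<sigma>"
    have u: "0 < u" "u \<le> 1" using False s vs by (auto simp: u_def)
    define t where "t = 1 / u"
    have t: "t > 0" using u by (simp add: t_def)
    define r where "r x = t * E / 2 * h x - t * g x + (t / 2 + 1 / (2 * t)) * f x" for x
    have hr: "has_bochner_integral lborel r (t * E / 2 * 1 - t * 1 + (t / 2 + 1 / (2 * t)) * 1)"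
      unfolding r_def
      by (intro has_bochner_integral_add has_bochner_integral_diff has_bochner_integral_mult_right hf hg hh)
    have pw: "\<bar>g x - f x\<bar> \<le> r x" for x
    proof -
      have fx: "f x > 0" unfolding f_def by (rule gdens_pos[OF s])
      have sq: "(g x)\<^sup>2 = E * h x * f x" unfolding g_def E_def h_def f_def by (rule gdens_sq_ident[OF s])
      have "\<bar>g x - f x\<bar> \<le> t / (2 * f x) * (g x - f x)\<^sup>2 + f x / (2 * t)" by (rule amgm_abs[OF fx t])
      also have "t / (2 * f x) * (g x - f x)\<^sup>2 = t / (2 * f x) * ((g x)\<^sup>2) - t * g x + t / 2 * f x"
        using fx by (simp add: power2_diff field_simps power2_eq_square)
      also have "t / (2 * f x) * ((g x)\<^sup>2) = t * E / 2 * h x"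
        unfolding sq using fx by (simp add: field_simps)
      finally show ?thesis unfolding r_def by (simp add: algebra_simps)
    qed
    have "(\<integral>x. \<bar>g x - f x\<bar> \<partial>lborel) \<le> (\<integral>x. r x \<partial>lborel)"
      using ig hr pw by (intro integral_mono) (auto simp: has_bochner_integral_iff)
    also have "(\<integral>x. r x \<partial>lborel) = t * E / 2 * 1 - t * 1 + (t / 2 + 1 / (2 * t)) * 1"
      using hr by (rule has_bochner_integral_integral_eq)
    also have "\<dots> = t * (E - 1) / 2 + 1 / (2 * t)"
      by (simp add: field_simps)
    also have "\<dots> \<le> 3 / (2 * \<sigma>) * norm v"
    proof -
      have uu: "(norm v)\<^sup>2 / \<sigma>\<^sup>2 = u\<^sup>2" by (simp add: u_def power_divide)
      have "E \<le> 1 + u\<^sup>2 + (u\<^sup>2)\<^sup>2" unfolding E_def uu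
        by (rule exp_bound) (use u in \<open>auto simp: power_le_one\<close>)
      also have "(u\<^sup>2)\<^sup>2 \<le> u\<^sup>2" using u by (simp add: power_le_one power2_eq_square mult_le_one)
      finally have E1: "E - 1 \<le> 2 * u\<^sup>2" by simp
      have "(E - 1) / (2 * u) \<le> (2 * u\<^sup>2) / (2 * u)"
        using divide_right_mono[OF E1, of "2 * u"] u by simp
      also have "(2 * u\<^sup>2) / (2 * u) = u" using u by (simp add: power2_eq_square)
      finally have E2: "(E - 1) / (2 * u) \<le> u" .
      have "t * (E - 1) / 2 + 1 / (2 * t) = (E - 1) / (2 * u) + u / 2"
        using u by (simp add: t_def field_simps)
      also have "\<dots> \<le> u + u / 2" using E2 by linarith
      finally have "t * (E - 1) / 2 + 1 / (2 * t) \<le> u + u / 2" .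
      also have "u + u / 2 = 3 / (2 * \<sigma>) * norm v" using s by (simp add: u_def field_simps)
      finally show ?thesis .
    qed
    finally show ?thesis unfolding f_def g_def .
  qed
qed


(* ---- part E1 ---- *)


lemma norm_vec_sq': "(norm (v::'a::real_normed_vector^'m))^2 = (\<Sum>i\<in>UNIV. (norm (v$i))^2)"
  unfolding norm_vec_def L2_set_def by (simp add: sum_nonneg)

lemma norm_mat_sq: "(norm (X::'a::real_normed_vector^'n^'m))\<^sup>2 = (\<Sum>j\<in>UNIV. (norm (column j X))\<^sup>2)"
proof -
  have "(norm X)\<^sup>2 = (\<Sum>i\<in>UNIV. \<Sum>j\<in>UNIV. (norm (X$i$j))\<^sup>2)"
    by (simp add: norm_vec_sq')
  also have "\<dots> = (\<Sum>j\<in>UNIV. \<Sum>i\<in>UNIV. (norm (X$i$j))\<^sup>2)" by (rule sum.swap)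
  also have "\<dots> = (\<Sum>j\<in>UNIV. (norm (column j X))\<^sup>2)"
    by (simp add: norm_vec_sq' column_def)
  finally show ?thesis .
qed

lemma column_mult_mv: "column j ((U::'a::semiring_1^'n^'m) ** X) = U *v column j X"
  by (simp add: vec_eq_iff column_def matrix_matrix_mult_def matrix_vector_mult_def)

context cjl begin

lemma hp_mv: "hp cj u (A *v v) = hp cj (adj cj A *v u) v"
proof -
  have "hp cj u (A *v v) = (\<Sum>i\<in>UNIV. \<Sum>k\<in>UNIV. cj (u$i) * (A$i$k * v$k))"
    unfolding hp_def matrix_vector_mult_def by (simp add: sum_distrib_left)
  also have "\<dots> = (\<Sum>k\<in>UNIV. \<Sum>i\<in>UNIV. cj (u$i) * (A$i$k * v$k))" by (rule sum.swap)
  also have "\<dots> = hp cj (adj cj A *v u) v"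
    unfolding hp_def matrix_vector_mult_def adj_def
    by (simp add: cj_sum cj_mult sum_distrib_left sum_distrib_right mult.commute mult.left_commute)
  finally show ?thesis .
qed

lemma norm_unit_mv: "unitg cj U \<Longrightarrow> norm (U *v v) = norm v"
proof -
  assume U: "unitg cj U"
  have "hp cj (U *v v) (U *v v) = hp cj v v"
    using U unfolding unitg_left by (simp add: hp_mv matrix_vector_mul_assoc)
  then have "(of_real ((norm (U *v v))\<^sup>2) :: 'k) = of_real ((norm v)\<^sup>2)" by (simp only: hp_self)
  then have "(norm (U *v v))\<^sup>2 = (norm v)\<^sup>2" by (simp only: of_real_eq_iff)
  then show ?thesis by (simp add: power2_eq_iff_nonneg)
qed

lemma norm_unit_mult: "unitg cj U \<Longrightarrow> norm (U ** X) = norm X"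
proof -
  assume U: "unitg cj U"
  have "(norm (U ** X))\<^sup>2 = (norm X)\<^sup>2"
    by (simp add: norm_mat_sq column_mult_mv norm_unit_mv[OF U])
  then show ?thesis by (simp add: power2_eq_iff_nonneg)
qed

lemma linear_left_mult: "linear (\<lambda>X::'k^'n^'n. U ** X)"
proof (rule linearI)
  show "U ** (x + y) = U ** x + U ** y" for x y by (rule matrix_add_ldistrib)
  show "U ** (c *\<^sub>R x) = c *\<^sub>R (U ** x)" for c x
    by (simp add: vec_eq_iff matrix_matrix_mult_def scaleR_sum_right)
qed

end

lemma lborel_unit:
  fixes cj :: "'k::{real_normed_field,euclidean_space} \<Rightarrow> 'k"
  assumes cj: "conjf cj" and U: "unitg cj U"
  shows "distr lborel borel (\<lambda>X::'k^'n^'n. U ** X) = lborel"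
proof -
  interpret cjl cj by (rule cjl.intro[OF cj])
  show ?thesis
  proof (rule lborel_isometry[where Ti="\<lambda>X. adj cj U ** X"])
    show "linear (\<lambda>X::'k^'n^'n. U ** X)" by (rule linear_left_mult)
    show "U ** (adj cj U ** x) = x" for x
      using U unfolding unitg_def by (simp add: matrix_mul_assoc)
    show "norm (U ** x) = norm x" for x by (rule norm_unit_mult[OF U])
  qed
qed


(* ---- part E2 ---- *)


lemma cont_mm:
  fixes F G :: "'x::topological_space \<Rightarrow> 'k::real_normed_field^'n^'n"
  assumes "continuous_on S F" "continuous_on S G"
  shows "continuous_on S (\<lambda>z. F z ** G z)"
  unfolding matrix_matrix_mult_def
  by (intro continuous_on_vec_lambda continuous_on_sum continuous_on_mult continuous_on_component assms)

lemma meas_mm_pair: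
  fixes q :: "'k::{real_normed_field,euclidean_space}^'n^'n \<Rightarrow> 'k^'n^'n"
  assumes q[measurable]: "q \<in> borel_measurable borel"
  shows "(\<lambda>z::(('k^'n^'n) \<times> ('k^'n^'n)). snd z ** q (fst z)) \<in> borel_measurable (borel \<Otimes>\<^sub>M borel)"
proof -
  have mm: "(\<lambda>z::(('k^'n^'n) \<times> ('k^'n^'n)). fst z ** snd z) \<in> borel_measurable (borel \<Otimes>\<^sub>M borel)"
    by (subst borel_prod) (intro borel_measurable_continuous_onI cont_mm continuous_on_fst continuous_on_snd continuous_on_id)
  have pq: "(\<lambda>z::(('k^'n^'n) \<times> ('k^'n^'n)). (snd z, q (fst z))) \<in> (borel \<Otimes>\<^sub>M borel) \<rightarrow>\<^sub>M (borel \<Otimes>\<^sub>M borel)"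
    by measurable
  show ?thesis using measurable_compose[OF pq mm] by simp
qed

lemma haar_eq:
  fixes cj :: "'k::{real_normed_field,euclidean_space} \<Rightarrow> 'k"
    and H :: "('k^('n::{finite,linorder})^('n::{finite,linorder})) measure"
  assumes cj: "conjf cj" and s: "\<sigma> > 0"
    and Hs: "sets H = sets borel" and Hp: "prob_space H" and Hu: "measure H {Q. unitg cj Q} = 1"
    and Hr: "\<And>Q. unitg cj Q \<Longrightarrow> distr H H (\<lambda>A. A ** Q) = H"
    and B: "B \<in> sets borel"
  shows "(\<integral>\<^sup>+X. ennreal (gdens \<sigma> X) * indicator B (qrg cj X) \<partial>lborel) = emeasure H B"
proof -
  interpret cjl cj by (rule cjl.intro[OF cj])
  interpret H: prob_space H by (rule Hp)
  note [measurable] = B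
  define f where "f X = ennreal (gdens \<sigma> X)" for X :: "'k^('n::{finite,linorder})^('n::{finite,linorder})"
  have qm[measurable]: "qrg cj \<in> borel_measurable (borel :: ('k^('n::{finite,linorder})^('n::{finite,linorder})) measure)"
    using qrg_measurable by simp
  have fm[measurable]: "f \<in> borel_measurable borel" unfolding f_def by measurable
  have spH: "space H = UNIV" using sets_eq_imp_space_eq[OF Hs] by simp
  have lm[measurable]: "(\<lambda>X. U ** X) \<in> borel_measurable (borel :: ('k^('n::{finite,linorder})^('n::{finite,linorder})) measure)" for U :: "'k^('n::{finite,linorder})^('n::{finite,linorder})"
    by (intro borel_measurable_continuous_onI cont_mm continuous_on_const continuous_on_id)
  have rm: "(\<lambda>X. X ** Q) \<in> borel_measurable (borel :: ('k^('n::{finite,linorder})^('n::{finite,linorder})) measure)" for Q :: "'k^('n::{finite,linorder})^('n::{finite,linorder})"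
    by (intro borel_measurable_continuous_onI cont_mm continuous_on_const continuous_on_id)
  define P where "P = (\<integral>\<^sup>+X. f X * indicator B (qrg cj X) \<partial>lborel)"
  have inv_U: "P = (\<integral>\<^sup>+X. f X * indicator B (U ** qrg cj X) \<partial>lborel)" if U: "unitg cj U" for U
  proof -
    have "P = (\<integral>\<^sup>+X. f X * indicator B (qrg cj X) \<partial>(distr lborel borel (\<lambda>X. U ** X)))"
      unfolding P_def using lborel_unit[OF cj U] by simp
    also have "\<dots> = (\<integral>\<^sup>+X. f (U ** X) * indicator B (qrg cj (U ** X)) \<partial>lborel)"
      by (rule nn_integral_distr) measurable
    also have "\<dots> = (\<integral>\<^sup>+X. f X * indicator B (U ** qrg cj X) \<partial>lborel)"
    proof (rule nn_integral_cong_AE)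
      show "AE X in lborel. f (U ** X) * indicator B (qrg cj (U ** X)) = f X * indicator B (U ** qrg cj X)"
        using AE_invset
      proof (rule AE_mp, intro AE_I2 impI)
        fix X :: "'k^('n::{finite,linorder})^('n::{finite,linorder})" assume "X \<in> invset"
        then have "qrg cj (U ** X) = U ** qrg cj X" using qrg_equivariant[OF _ U] in_invset by blast
        moreover have "f (U ** X) = f X" unfolding f_def gdens_def by (simp add: norm_unit_mult[OF U])
        ultimately show "f (U ** X) * indicator B (qrg cj (U ** X)) = f X * indicator B (U ** qrg cj X)" by simp
      qed
    qed
    finally show ?thesis .
  qed
  have AEU: "AE U in H. unitg cj U" using H.AE_prob_1[OF Hu] by simp
  have "P = (\<integral>\<^sup>+U. P \<partial>H)" by (simp add: nn_integral_const H.emeasure_space_1)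
  also have "\<dots> = (\<integral>\<^sup>+U. (\<integral>\<^sup>+X. f X * indicator B (U ** qrg cj X) \<partial>lborel) \<partial>H)"
    by (rule nn_integral_cong_AE) (use AEU inv_U in \<open>auto elim: AE_mp\<close>)
  also have "\<dots> = (\<integral>\<^sup>+X. (\<integral>\<^sup>+U. f X * indicator B (U ** qrg cj X) \<partial>H) \<partial>lborel)"
  proof (rule pair_sigma_finite.Fubini'[of lborel H "\<lambda>X U. f X * indicator B (U ** qrg cj X)"])
    show "pair_sigma_finite lborel H"
      by (intro pair_sigma_finite.intro sigma_finite_lborel H.sigma_finite_measure_axioms)
    have sp: "sets (lborel \<Otimes>\<^sub>M H) = sets ((borel :: ('k^('n::{finite,linorder})^('n::{finite,linorder})) measure) \<Otimes>\<^sub>M (borel :: ('k^('n::{finite,linorder})^('n::{finite,linorder})) measure))"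
      by (rule sets_pair_measure_cong) (simp_all add: Hs)
    have [measurable]: "(\<lambda>z. snd z ** qrg cj (fst z)) \<in> borel_measurable ((borel :: ('k^('n::{finite,linorder})^('n::{finite,linorder})) measure) \<Otimes>\<^sub>M (borel :: ('k^('n::{finite,linorder})^('n::{finite,linorder})) measure))"
      by (rule meas_mm_pair[OF qm])
    show "(\<lambda>(X, U). f X * indicator B (U ** qrg cj X)) \<in> borel_measurable (lborel \<Otimes>\<^sub>M H)"
      unfolding measurable_cong_sets[OF sp refl] split_beta' by measurable
  qed
  also have "\<dots> = (\<integral>\<^sup>+X. f X * emeasure H B \<partial>lborel)"
  proof (rule nn_integral_cong_AE)
    show "AE X in lborel. (\<integral>\<^sup>+U. f X * indicator B (U ** qrg cj X) \<partial>H) = f X * emeasure H B"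
      using AE_invset
    proof (rule AE_mp, intro AE_I2 impI)
      fix X :: "'k^('n::{finite,linorder})^('n::{finite,linorder})" assume "X \<in> invset"
      then have Q: "unitg cj (qrg cj X)" using qrg_prop in_invset by blast
      define Q0 where "Q0 = qrg cj X"
      have rmH: "(\<lambda>U. U ** Q0) \<in> H \<rightarrow>\<^sub>M H"
        unfolding measurable_cong_sets[OF Hs Hs] by (rule rm)
      have BH: "B \<in> sets H" using B Hs by simp
      have "(\<integral>\<^sup>+U. f X * indicator B (U ** Q0) \<partial>H) = f X * (\<integral>\<^sup>+U. indicator B (U ** Q0) \<partial>H)"
        by (rule nn_integral_cmult) (use rmH BH in measurable)
      also have "(\<integral>\<^sup>+U. indicator B (U ** Q0) \<partial>H) = emeasure H ((\<lambda>U. U ** Q0) -` B \<inter> space H)"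
      proof -
        have pre: "(\<lambda>U. U ** Q0) -` B \<in> sets H" using measurable_sets[OF rmH BH] spH by simp
        have "(\<integral>\<^sup>+U. indicator B (U ** Q0) \<partial>H) = (\<integral>\<^sup>+U. indicator ((\<lambda>U. U ** Q0) -` B) U \<partial>H)"
          by (simp only: indicator_vimage)
        also have "\<dots> = emeasure H ((\<lambda>U. U ** Q0) -` B)" by (rule nn_integral_indicator[OF pre])
        finally show ?thesis using spH by simp
      qed
      also have "\<dots> = emeasure (distr H H (\<lambda>U. U ** Q0)) B"
        by (rule emeasure_distr[symmetric, OF rmH BH])
      also have "\<dots> = emeasure H B" using Hr[OF Q] unfolding Q0_def by simp
      finally show "(\<integral>\<^sup>+U. f X * indicator B (U ** qrg cj X) \<partial>H) = f X * emeasure H B"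
        unfolding Q0_def .
    qed
  qed
  also have "\<dots> = emeasure H B"
  proof -
    have f1: "integral\<^sup>N lborel f = 1" unfolding f_def using gdens_nn1[OF s] by simp
    show ?thesis by (subst nn_integral_multc) (auto simp: f1)
  qed
  finally show ?thesis unfolding P_def f_def .
qed


(* ---- part F1 ---- *)


context cjl begin
lemma qrg_scale_all:
  fixes A :: "'k^('n::{finite,linorder})^('n::{finite,linorder})"
  assumes c: "c > 0"
  shows "qrg cj (c *\<^sub>R A) = qrg cj A"
proof (cases "A \<in> invset")
  case True then show ?thesis using qrg_scale[OF _ c] in_invset by blast
next
  case False
  have "c *\<^sub>R A \<notin> invset"
  proof
    assume "c *\<^sub>R A \<in> invset"
    then have H: "\<And>w. (c *\<^sub>R A) *v w = 0 \<Longrightarrow> w = 0" unfolding in_invset by blast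
    have "A \<in> invset"
      unfolding in_invset
    proof (intro allI impI)
      fix w assume "A *v w = 0"
      moreover have "(c *\<^sub>R A) *v w = c *\<^sub>R (A *v w)"
        by (simp add: vec_eq_iff matrix_vector_mult_def scaleR_sum_right)
      ultimately show "w = 0" using H by simp
    qed
    then show False using False by simp
  qed
  then show ?thesis using False qrg_bad in_invset by metis
qed
end

lemma tv_generic:
  fixes cj :: "'k::{real_normed_field,euclidean_space} \<Rightarrow> 'k"
    and H :: "('k^('n::{finite,linorder})^('n::{finite,linorder})) measure"
  assumes cj: "conjf cj" and s: "\<sigma> > 0"
    and Hs: "sets H = sets borel" and Hp: "prob_space H" and Hu: "measure H {Q. unitg cj Q} = 1"
    and Hr: "\<And>Q. unitg cj Q \<Longrightarrow> distr H H (\<lambda>A. A ** Q) = H"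
    and th: "0 \<le> \<theta>" "\<theta> < min (1/2) (\<sigma> / (2 * norm (mat 1 :: 'k^('n::{finite,linorder})^('n::{finite,linorder}))))"
  shows "tv_dist (distr (density lborel (\<lambda>X. ennreal (gdens \<sigma> X))) borel
            (\<lambda>X. qrg cj ((1 - \<theta>) *\<^sub>R X + \<theta> *\<^sub>R mat 1))) H
         \<le> (3 * norm (mat 1 :: 'k^('n::{finite,linorder})^('n::{finite,linorder})) / \<sigma>) * \<theta>"
proof -
  interpret cjl cj by (rule cjl.intro[OF cj])
  interpret H: prob_space H by (rule Hp)
  define nm where "nm = norm (mat 1 :: 'k^('n::{finite,linorder})^('n::{finite,linorder}))"
  have nm0: "nm > 0" unfolding nm_def by (simp add: vec_eq_iff mat_def)
  have th1: "\<theta> < 1/2" and th2: "\<theta> < \<sigma> / (2 * nm)" using th(2) unfolding nm_def by auto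
  define sc where "sc = \<theta> / (1 - \<theta>)"
  define w where "w = sc *\<^sub>R (mat 1 :: 'k^('n::{finite,linorder})^('n::{finite,linorder}))"
  have sc0: "0 \<le> sc" using th th1 by (simp add: sc_def)
  have sc2: "sc \<le> 2 * \<theta>"
  proof -
    have "0 \<le> \<theta> * (1 - 2 * \<theta>)" using th(1) th1 by simp
    then have "\<theta> \<le> 2 * \<theta> * (1 - \<theta>)" by (simp add: algebra_simps)
    moreover have "0 < 1 - \<theta>" using th1 by simp
    ultimately show ?thesis unfolding sc_def by (simp add: pos_divide_le_eq)
  qed
  have nw: "norm w = sc * nm" unfolding w_def nm_def using sc0 by simp
  have nw2: "norm w \<le> 2 * \<theta> * nm" unfolding nw using sc2 nm0 by (simp add: mult_right_mono)
  have nws: "norm w \<le> \<sigma>"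
  proof -
    have "2 * \<theta> * nm \<le> \<sigma>" using th2 nm0 by (simp add: field_simps)
    then show ?thesis using nw2 by simp
  qed
  define \<phi> where "\<phi> X = qrg cj ((1 - \<theta>) *\<^sub>R X + \<theta> *\<^sub>R mat 1)" for X :: "'k^('n::{finite,linorder})^('n::{finite,linorder})"
  have phi_eq: "\<phi> X = qrg cj (w + X)" for X
  proof -
    have "(1 - \<theta>) *\<^sub>R X + \<theta> *\<^sub>R mat 1 = (1 - \<theta>) *\<^sub>R (w + X)"
      using th1 by (simp add: w_def sc_def scaleR_add_right)
    then show ?thesis unfolding \<phi>_def using qrg_scale_all[of "1 - \<theta>"] th1 by simp
  qed
  have qm[measurable]: "qrg cj \<in> borel_measurable (borel :: ('k^('n::{finite,linorder})^('n::{finite,linorder})) measure)"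
    using qrg_measurable by simp
  have phim[measurable]: "\<phi> \<in> borel_measurable (borel :: ('k^('n::{finite,linorder})^('n::{finite,linorder})) measure)"
    unfolding phi_eq[abs_def] by measurable
  define G where "G = density lborel (\<lambda>X. ennreal (gdens \<sigma> (X :: 'k^('n::{finite,linorder})^('n::{finite,linorder}))))"
  define M where "M = distr G borel \<phi>"
  have sM: "sets M = sets borel" unfolding M_def by simp
  have bound: "\<bar>measure M A - measure H A\<bar> \<le> (3 * nm / \<sigma>) * \<theta>" if A: "A \<in> sets borel" for A
  proof -
    note [measurable] = A
    define g where "g Y = gdens \<sigma> (Y - w)" for Y
    define f where "f Y = gdens \<sigma> (Y :: 'k^('n::{finite,linorder})^('n::{finite,linorder}))" for Y
    have pre: "qrg cj -` A \<in> sets lborel" using measurable_sets_borel[OF qm A] by simp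
    have hf: "has_bochner_integral lborel f 1" unfolding f_def by (rule gdens_hb[OF s])
    have hg: "has_bochner_integral lborel g 1"
      using gdens_shift_hb[OF s, of "-w"] unfolding g_def by simp
    have ig: "integrable lborel (\<lambda>Y. g Y * indicator A (qrg cj Y))"
      using integrable_mult_indicator[OF pre, of g] hg
      by (simp add: has_bochner_integral_iff indicator_vimage mult.commute)
    have if': "integrable lborel (\<lambda>Y. f Y * indicator A (qrg cj Y))"
      using integrable_mult_indicator[OF pre, of f] hf
      by (simp add: has_bochner_integral_iff indicator_vimage mult.commute)
    have eM: "emeasure M A = (\<integral>\<^sup>+Y. ennreal (g Y * indicator A (qrg cj Y)) \<partial>lborel)"
    proof -
      have "emeasure M A = emeasure G (\<phi> -` A \<inter> space G)"
        unfolding M_def by (rule emeasure_distr) (auto simp: G_def)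
      also have "\<dots> = (\<integral>\<^sup>+X. ennreal (gdens \<sigma> X) * indicator (\<phi> -` A) X \<partial>lborel)"
        unfolding G_def by (subst emeasure_density) (auto simp: nn_integral_set_ennreal mult.commute intro!: measurable_sets_borel[OF phim A])
      also have "\<dots> = (\<integral>\<^sup>+X. ennreal (g (w + X) * indicator A (qrg cj (w + X))) \<partial>lborel)"
        by (rule nn_integral_cong) (simp add: g_def indicator_vimage phi_eq ennreal_mult' indicator_def)
      also have "\<dots> = (\<integral>\<^sup>+Y. ennreal (g Y * indicator A (qrg cj Y)) \<partial>lborel)"
        by (rule nn_integral_lborel_shift[where f="\<lambda>Y. ennreal (g Y * indicator A (qrg cj Y))"]) (unfold g_def, measurable)
      finally show ?thesis .
    qed
    have mM: "measure M A = (\<integral>Y. g Y * indicator A (qrg cj Y) \<partial>lborel)"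
      unfolding measure_def eM
      by (subst nn_integral_eq_integral[OF ig]) (auto simp: g_def gdens_nonneg[OF s] intro!: integral_nonneg_AE)
    have eH: "emeasure H A = (\<integral>\<^sup>+Y. ennreal (f Y * indicator A (qrg cj Y)) \<partial>lborel)"
    proof -
      have "(\<integral>\<^sup>+Y. ennreal (f Y * indicator A (qrg cj Y)) \<partial>lborel)
          = (\<integral>\<^sup>+X. ennreal (gdens \<sigma> X) * indicator A (qrg cj X) \<partial>lborel)"
        by (rule nn_integral_cong) (simp add: f_def indicator_def)
      then show ?thesis using haar_eq[OF cj s Hs Hp Hu Hr A] by simp
    qed
    have mH: "measure H A = (\<integral>Y. f Y * indicator A (qrg cj Y) \<partial>lborel)"
      unfolding measure_def eH
      by (subst nn_integral_eq_integral[OF if']) (auto simp: f_def gdens_nonneg[OF s] intro!: integral_nonneg_AE)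
    have "measure M A - measure H A = (\<integral>Y. (g Y - f Y) * indicator A (qrg cj Y) \<partial>lborel)"
      unfolding mM mH by (subst Bochner_Integration.integral_diff[OF ig if', symmetric]) (simp add: left_diff_distrib)
    also have "\<bar>\<dots>\<bar> \<le> (\<integral>Y. \<bar>g Y - f Y\<bar> \<partial>lborel)"
    proof (rule integral_abs_bound_integral)
      show "integrable lborel (\<lambda>Y. (g Y - f Y) * indicator A (qrg cj Y))"
        using Bochner_Integration.integrable_diff[OF ig if'] by (simp add: left_diff_distrib)
      show "integrable lborel (\<lambda>Y. \<bar>g Y - f Y\<bar>)"
        using gauss_L1(1)[OF s nws] unfolding g_def f_def .
      show "\<bar>(g Y - f Y) * indicator A (qrg cj Y)\<bar> \<le> \<bar>g Y - f Y\<bar>" for Y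
        by (simp add: indicator_def abs_mult)
    qed
    also have "\<dots> \<le> 3 / (2 * \<sigma>) * norm w"
      using gauss_L1(2)[OF s nws] unfolding g_def f_def .
    also have "\<dots> \<le> 3 / (2 * \<sigma>) * (2 * \<theta> * nm)"
      using nw2 s by (intro mult_left_mono) auto
    also have "\<dots> = (3 * nm / \<sigma>) * \<theta>" by (simp add: field_simps)
    finally show ?thesis .
  qed
  have "tv_dist M H \<le> (3 * nm / \<sigma>) * \<theta>"
    unfolding tv_dist_def
  proof (rule cSUP_least)
    show "sets M \<noteq> {}" using sets.empty_sets by blast
    fix A assume "A \<in> sets M"
    then show "\<bar>measure M A - measure H A\<bar> \<le> (3 * nm / \<sigma>) * \<theta>" using bound sM by simp
  qed
  then show ?thesis unfolding M_def G_def \<phi>_def nm_def .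
qed


(* ---- part G1 ---- *)


lemma unitg_id: "unitg id (Q::real^'n^'n) \<longleftrightarrow> orthogonal_matrix Q"
proof -
  have "adj id Q = Finite_Cartesian_Product.transpose Q"
    by (simp add: adj_def Finite_Cartesian_Product.transpose_def)
  then show ?thesis unfolding unitg_def orthogonal_matrix_def by simp
qed

lemma unitg_cnj: "unitg cnj (Q::complex^'n^'n) \<longleftrightarrow> unitary_matrix Q"
proof -
  have "adj cnj Q = cnj_transpose Q" by (simp add: adj_def cnj_transpose_def)
  then show ?thesis unfolding unitg_def unitary_matrix_def by simp
qed

lemma qr_real_eq: "qr_Q_real (A::real^('n::{finite,linorder})^('n::{finite,linorder})) = qrg id A"
proof -
  have "posd R \<longleftrightarrow> (\<forall>i. R $ i $ i > 0)" for R :: "real^('n::{finite,linorder})^('n::{finite,linorder})"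
    unfolding posd_def by auto
  then show ?thesis unfolding qr_Q_real_def qrg_def unitg_id by simp
qed

lemma qr_complex_eq: "qr_Q_complex (A::complex^('n::{finite,linorder})^('n::{finite,linorder})) = qrg cnj A"
proof -
  have "posd R \<longleftrightarrow> (\<forall>i. Im (R $ i $ i) = 0 \<and> Re (R $ i $ i) > 0)" for R :: "complex^('n::{finite,linorder})^('n::{finite,linorder})"
    unfolding posd_def
  proof (intro iffI allI)
    fix i assume "\<forall>i. \<exists>r>0. R $ i $ i = complex_of_real r"
    then obtain r where "r > 0" "R $ i $ i = complex_of_real r" by blast
    then show "Im (R $ i $ i) = 0 \<and> Re (R $ i $ i) > 0" by simp
  next
    fix i assume "\<forall>i. Im (R $ i $ i) = 0 \<and> Re (R $ i $ i) > 0"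
    then have "Im (R $ i $ i) = 0" "Re (R $ i $ i) > 0" by auto
    then show "\<exists>r>0. R $ i $ i = complex_of_real r"
      by (intro exI[of _ "Re (R $ i $ i)"]) (simp add: complex_eq_iff)
  qed
  then show ?thesis unfolding qr_Q_complex_def qrg_def unitg_cnj by simp
qed

lemma prod_prod_exp:
  fixes a :: "'n::finite \<Rightarrow> 'n \<Rightarrow> real"
  shows "(\<Prod>i\<in>UNIV. \<Prod>j\<in>UNIV. c * exp (a i j)) = c ^ (CARD('n) * CARD('n)) * exp (\<Sum>i\<in>UNIV. \<Sum>j\<in>UNIV. a i j)"
  by (simp add: prod.distrib exp_sum power_mult)

lemma norm_mat_entries: "(norm (X::'a::real_normed_vector^'n^'m))\<^sup>2 = (\<Sum>i\<in>UNIV. \<Sum>j\<in>UNIV. (norm (X$i$j))\<^sup>2)"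
  by (simp add: norm_vec_sq')

lemma real_ginibre_eq: "(real_ginibre :: (real^'n^'n) measure) = density lborel (\<lambda>X. ennreal (gdens 1 X))"
proof -
  have "(\<Prod>i\<in>UNIV. \<Prod>j\<in>UNIV. std_normal_density (X $ i $ j)) = gdens 1 X" for X :: "real^'n^'n"
  proof -
    have "(\<Prod>i\<in>UNIV. \<Prod>j\<in>UNIV. std_normal_density (X $ i $ j))
        = (\<Prod>i\<in>UNIV. \<Prod>j\<in>UNIV. (1 / sqrt (2 * pi)) * exp (- (X $ i $ j)\<^sup>2 / 2))"
      by (simp add: std_normal_density_def)
    also have "\<dots> = (1 / sqrt (2 * pi)) ^ (CARD('n) * CARD('n)) * exp (\<Sum>i\<in>UNIV. \<Sum>j\<in>UNIV. - (X $ i $ j)\<^sup>2 / 2)"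
      by (rule prod_prod_exp)
    also have "(\<Sum>i\<in>UNIV. \<Sum>j\<in>UNIV. - (X $ i $ j)\<^sup>2 / 2) = - (norm X)\<^sup>2 / (2 * 1\<^sup>2)"
      unfolding norm_mat_entries by (simp add: sum_divide_distrib sum_negf)
    finally show ?thesis unfolding gdens_def by simp
  qed
  then show ?thesis unfolding real_ginibre_def by simp
qed

lemma complex_ginibre_eq: "(complex_ginibre :: (complex^'n^'n) measure) = density lborel (\<lambda>X. ennreal (gdens (1 / sqrt 2) X))"
proof -
  have "(\<Prod>i\<in>UNIV. \<Prod>j\<in>UNIV. std_complex_normal_density (X $ i $ j)) = gdens (1 / sqrt 2) X" for X :: "complex^'n^'n"
  proof -
    have "(\<Prod>i\<in>UNIV. \<Prod>j\<in>UNIV. std_complex_normal_density (X $ i $ j))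
        = (\<Prod>i\<in>UNIV. \<Prod>j\<in>UNIV. (1 / pi) * exp (- (cmod (X $ i $ j))\<^sup>2))"
      by (simp add: std_complex_normal_density_def)
    also have "\<dots> = (1 / pi) ^ (CARD('n) * CARD('n)) * exp (\<Sum>i\<in>UNIV. \<Sum>j\<in>UNIV. - (cmod (X $ i $ j))\<^sup>2)"
      by (rule prod_prod_exp)
    also have "(\<Sum>i\<in>UNIV. \<Sum>j\<in>UNIV. - (cmod (X $ i $ j))\<^sup>2) = - (norm X)\<^sup>2 / (2 * (1 / sqrt 2)\<^sup>2)"
      unfolding norm_mat_entries by (simp add: sum_negf power_divide)
    also have "(1 / pi) ^ (CARD('n) * CARD('n)) = (1 / sqrt (2 * pi * (1 / sqrt 2)\<^sup>2)) ^ DIM(complex^'n^'n)"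
    proof -
      have d: "DIM(complex^'n^'n) = 2 * (CARD('n) * CARD('n))" by simp
      have s2: "2 * pi * (1 / sqrt 2)\<^sup>2 = pi" by (simp add: power_divide)
      have "(1 / sqrt (2 * pi * (1 / sqrt 2)\<^sup>2)) ^ DIM(complex^'n^'n) = ((1 / sqrt pi)\<^sup>2) ^ (CARD('n) * CARD('n))"
        unfolding d s2 by (simp only: power_mult)
      also have "(1 / sqrt pi)\<^sup>2 = 1 / pi" by (simp add: power_divide)
      finally show ?thesis by simp
    qed
    finally show ?thesis unfolding gdens_def by simp
  qed
  then show ?thesis unfolding complex_ginibre_def by simp
qed


(* ---- part H1 ---- *)


theorem lemma15:
  shows "(\<exists>C \<delta>. \<delta> > 0 \<and> (\<forall>H :: (real^('n::{finite,linorder})^('n::{finite,linorder})) measure. haar_orthogonal H \<longrightarrow>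
            (\<forall>\<theta>::real. 0 \<le> \<theta> \<and> \<theta> < \<delta> \<longrightarrow>
              tv_dist (distr real_ginibre borel
                  (\<lambda>X. qr_Q_real ((1 - \<theta>) *\<^sub>R X + \<theta> *\<^sub>R mat 1))) H \<le> C * \<theta>)))
       \<and> (\<exists>C \<delta>. \<delta> > 0 \<and> (\<forall>H :: (complex^('n::{finite,linorder})^('n::{finite,linorder})) measure. haar_unitary H \<longrightarrow>
            (\<forall>\<theta>::real. 0 \<le> \<theta> \<and> \<theta> < \<delta> \<longrightarrow>
              tv_dist (distr complex_ginibre borel
                  (\<lambda>X. qr_Q_complex ((1 - \<theta>) *\<^sub>R X + \<theta> *\<^sub>R mat 1))) H \<le> C * \<theta>)))"
proof
  define nm where "nm = norm (mat 1 :: real^('n::{finite,linorder})^('n::{finite,linorder}))"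
  have nm0: "nm > 0" unfolding nm_def by (simp add: vec_eq_iff mat_def)
  show "\<exists>C \<delta>. \<delta> > 0 \<and> (\<forall>H :: (real^('n::{finite,linorder})^('n::{finite,linorder})) measure. haar_orthogonal H \<longrightarrow>
            (\<forall>\<theta>::real. 0 \<le> \<theta> \<and> \<theta> < \<delta> \<longrightarrow>
              tv_dist (distr real_ginibre borel
                  (\<lambda>X. qr_Q_real ((1 - \<theta>) *\<^sub>R X + \<theta> *\<^sub>R mat 1))) H \<le> C * \<theta>))"
  proof (intro exI conjI allI impI)
    show "min (1/2) (1 / (2 * nm)) > 0" using nm0 by simp
    fix H :: "(real^('n::{finite,linorder})^('n::{finite,linorder})) measure" and \<theta> :: real
    assume hH: "haar_orthogonal H" and th: "0 \<le> \<theta> \<and> \<theta> < min (1/2) (1 / (2 * nm))"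
    have Hs: "sets H = sets borel" and Hp: "prob_space H" and Hu: "measure H {Q. unitg id Q} = 1"
      and Hr: "\<And>Q. unitg id Q \<Longrightarrow> distr H H (\<lambda>A. A ** Q) = H"
      using hH unfolding haar_orthogonal_def unitg_id by auto
    have "tv_dist (distr (density lborel (\<lambda>X. ennreal (gdens 1 X))) borel
            (\<lambda>X. qrg id ((1 - \<theta>) *\<^sub>R X + \<theta> *\<^sub>R mat 1))) H \<le> (3 * nm / 1) * \<theta>"
      unfolding nm_def
      by (rule tv_generic[OF conjf_id _ Hs Hp Hu Hr]) (use th nm_def in auto)
    then show "tv_dist (distr real_ginibre borel
                  (\<lambda>X. qr_Q_real ((1 - \<theta>) *\<^sub>R X + \<theta> *\<^sub>R mat 1))) H \<le> (3 * nm / 1) * \<theta>"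
      by (simp add: real_ginibre_eq qr_real_eq)
  qed
next
  define nm where "nm = norm (mat 1 :: complex^('n::{finite,linorder})^('n::{finite,linorder}))"
  have nm0: "nm > 0" unfolding nm_def by (simp add: vec_eq_iff mat_def)
  have s: "(1 / sqrt 2 :: real) > 0" by simp
  show "\<exists>C \<delta>. \<delta> > 0 \<and> (\<forall>H :: (complex^('n::{finite,linorder})^('n::{finite,linorder})) measure. haar_unitary H \<longrightarrow>
            (\<forall>\<theta>::real. 0 \<le> \<theta> \<and> \<theta> < \<delta> \<longrightarrow>
              tv_dist (distr complex_ginibre borel
                  (\<lambda>X. qr_Q_complex ((1 - \<theta>) *\<^sub>R X + \<theta> *\<^sub>R mat 1))) H \<le> C * \<theta>))"
  proof (intro exI conjI allI impI)
    show "min (1/2) ((1 / sqrt 2) / (2 * nm)) > 0" using nm0 by simp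
    fix H :: "(complex^('n::{finite,linorder})^('n::{finite,linorder})) measure" and \<theta> :: real
    assume hH: "haar_unitary H" and th: "0 \<le> \<theta> \<and> \<theta> < min (1/2) ((1 / sqrt 2) / (2 * nm))"
    have Hs: "sets H = sets borel" and Hp: "prob_space H" and Hu: "measure H {Q. unitg cnj Q} = 1"
      and Hr: "\<And>Q. unitg cnj Q \<Longrightarrow> distr H H (\<lambda>A. A ** Q) = H"
      using hH unfolding haar_unitary_def unitg_cnj by auto
    have "tv_dist (distr (density lborel (\<lambda>X. ennreal (gdens (1 / sqrt 2) X))) borel
            (\<lambda>X. qrg cnj ((1 - \<theta>) *\<^sub>R X + \<theta> *\<^sub>R mat 1))) H \<le> (3 * nm / (1 / sqrt 2)) * \<theta>"
      unfolding nm_def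
      by (rule tv_generic[OF conjf_cnj s Hs Hp Hu Hr]) (use th nm_def in auto)
    then show "tv_dist (distr complex_ginibre borel
                  (\<lambda>X. qr_Q_complex ((1 - \<theta>) *\<^sub>R X + \<theta> *\<^sub>R mat 1))) H \<le> (3 * nm / (1 / sqrt 2)) * \<theta>"
      by (simp add: complex_ginibre_eq qr_complex_eq)
  qed
qed


end
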